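(* The following two statements are equivalent. (a) No Shapiro–Shields function has an extraneous reproducible zero; that is, for every reproducible multiset $Z$ there is no reproducible point $\beta$ such that either ($\beta\notin Z$ and $\mathcal S_Z(\beta)=0$) or ($\beta$ appears in $Z$ exactly $m$ times, $\beta$ is reproducible of order $m$, and $\mathcal S_Z^{(m)}(\beta)=0$). (b) For any two nonzero polynomials $p$ and $q$, with $d_p=\operatorname{ord}_0(p)$ and $d_q=\operatorname{ord}_0(q)$, if $\Pi_{[p]}\big(k_0^{(d_p)}\big)=\Pi_{[q]}\big(k_0^{(d_q)}\big)$, then $[p]=[q]$.
   Context: Standing assumptions: $\Omega\subset\mathbb C$ is a domain with $0\in\Omega$, $\mathcal H$ is a Hilbert space of analytic functions on $\Omega$ with bounded point evaluations at points of $\Omega$, the shift $(Sf)(z)=zf(z)$ is bounded on $\mathcal H$, and the polynomials $\mathcal P$ are dense in $\mathcal H$. $[g]$ is the closure of $\operatorname{span}\{z^kg:k\ge0\}$; $\Pi_V$ is orthogonal projection; $\operatorname{ord}_0$ is the order of vanishing at $0$. A point $\beta\in\mathbb C$ is reproducible of order $m\ge0$ if $p\mapsto p^{(m)}(\beta)$ on $\mathcal P$ extends to a bounded linear functional on $\mathcal H$; the value of the extension at $g\in\mathcal H$ is written $g^{(m)}(\beta)$ and it is represented by $k_\beta^{(m)}\in\mathcal H$. $\beta$ is a reproducible point if reproducible of order $0$; reproducibility of order $m$ implies that of all orders $j\le m$; $\operatorname{ro}(\beta)$ is the supremum of orders of reproducibility. A reproducible multiset is a finite multiset consisting of $0$ with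 multiplicity $m_0\ge0$ and distinct nonzero reproducible points $\beta_1,\dots,\beta_s$ with multiplicities $1\le m_j\le\operatorname{ro}(\beta_j)+1$. For vectors $u,v_1,\dots,v_N$, $D(u;v_1,\dots,v_N)$ is the formal determinant of the matrix with first row $(u,\langle u,v_1\rangle,\dots,\langle u,v_N\rangle)$ and $(i+1)$-st row $(v_i,\langle v_i,v_1\rangle,\dots,\langle v_i,v_N\rangle)$, expanded along the first column. The Shapiro–Shields function of $Z$ is $\mathcal S_Z=D(k_0^{(m_0)};k_0^{(m_0-1)},\dots,k_0,k_{\beta_1}^{(m_1-1)},\dots,k_{\beta_1},\dots,k_{\beta_s}^{(m_s-1)},\dots,k_{\beta_s})$. *)

theory Defs
  imports "HOL-Complex_Analysis.Complex_Analysis" "HOL-Computational_Algebra.Polynomial"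
    "HOL-Library.Multiset" "Jordan_Normal_Form.Determinant"
begin

text \<open>Elements of the Hilbert space are functions complex => complex that are
  analytic on the domain Om and vanish outside Om (so that a function is determined
  by its restriction to Om). The inner product ip is linear in the first argument.\<close>

type_synonym cfun = "complex \<Rightarrow> complex"

definition hnorm :: "(cfun \<Rightarrow> cfun \<Rightarrow> complex) \<Rightarrow> cfun \<Rightarrow> real" where
  "hnorm ip f = sqrt (Re (ip f f))"

definition polyfun :: "complex set \<Rightarrow> complex poly \<Rightarrow> cfun" where
  "polyfun Om p = (\<lambda>z. if z \<in> Om then poly p z else 0)"

definition shift :: "complex set \<Rightarrow> cfun \<Rightarrow> cfun" where
  "shift Om f = (\<lambda>z. if z \<in> Om then z * f z else 0)"

definition setting :: "complex set \<Rightarrow> cfun set \<Rightarrow> (cfun \<Rightarrow> cfun \<Rightarrow> complex) \<Rightarrow> bool" where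
  "setting Om H ip \<longleftrightarrow>
     open Om \<and> connected Om \<and> 0 \<in> Om \<and>
     (\<forall>f\<in>H. f holomorphic_on Om \<and> (\<forall>z. z \<notin> Om \<longrightarrow> f z = 0)) \<and>
     (\<lambda>z. 0) \<in> H \<and>
     (\<forall>f\<in>H. \<forall>g\<in>H. (\<lambda>z. f z + g z) \<in> H) \<and>
     (\<forall>f\<in>H. \<forall>c. (\<lambda>z. c * f z) \<in> H) \<and>
     (\<forall>f\<in>H. \<forall>g\<in>H. \<forall>h\<in>H. ip (\<lambda>z. f z + g z) h = ip f h + ip g h) \<and>
     (\<forall>f\<in>H. \<forall>g\<in>H. \<forall>c. ip (\<lambda>z. c * f z) g = c * ip f g) \<and>
     (\<forall>f\<in>H. \<forall>g\<in>H. ip g f = cnj (ip f g)) \<and>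
     (\<forall>f\<in>H. Im (ip f f) = 0 \<and> Re (ip f f) \<ge> 0) \<and>
     (\<forall>f\<in>H. ip f f = 0 \<longrightarrow> f = (\<lambda>z. 0)) \<and>
     \<comment> \<open>completeness\<close>
     (\<forall>X. (\<forall>n. X n \<in> H) \<and>
          (\<forall>e>0. \<exists>N. \<forall>m\<ge>N. \<forall>n\<ge>N. hnorm ip (\<lambda>z. X m z - X n z) < e) \<longrightarrow>
          (\<exists>f\<in>H. (\<lambda>n. hnorm ip (\<lambda>z. X n z - f z)) \<longlonglongrightarrow> 0)) \<and>
     \<comment> \<open>bounded point evaluations on Om\<close>
     (\<forall>w\<in>Om. \<exists>C. \<forall>f\<in>H. cmod (f w) \<le> C * hnorm ip f) \<and>
     \<comment> \<open>the shift is a bounded operator on H\<close>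
     (\<forall>f\<in>H. shift Om f \<in> H) \<and>
     (\<exists>C. \<forall>f\<in>H. hnorm ip (shift Om f) \<le> C * hnorm ip f) \<and>
     \<comment> \<open>polynomials belong to H and are dense\<close>
     (\<forall>p. polyfun Om p \<in> H) \<and>
     (\<forall>f\<in>H. \<forall>e>0. \<exists>p. hnorm ip (\<lambda>z. f z - polyfun Om p z) < e)"

definition reproducible_order ::
  "complex set \<Rightarrow> (cfun \<Rightarrow> cfun \<Rightarrow> complex) \<Rightarrow> complex \<Rightarrow> nat \<Rightarrow> bool" where
  "reproducible_order Om ip \<beta> m \<longleftrightarrow>
     (\<exists>C. \<forall>p. cmod (poly ((pderiv ^^ m) p) \<beta>) \<le> C * hnorm ip (polyfun Om p))"

definition reproducible :: "complex set \<Rightarrow> (cfun \<Rightarrow> cfun \<Rightarrow> complex) \<Rightarrow> complex \<Rightarrow> bool" where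
  "reproducible Om ip \<beta> \<longleftrightarrow> reproducible_order Om ip \<beta> 0"

definition kern ::
  "complex set \<Rightarrow> cfun set \<Rightarrow> (cfun \<Rightarrow> cfun \<Rightarrow> complex) \<Rightarrow> complex \<Rightarrow> nat \<Rightarrow> cfun" where
  "kern Om H ip \<beta> m =
     (SOME k. k \<in> H \<and> (\<forall>p. ip (polyfun Om p) k = poly ((pderiv ^^ m) p) \<beta>))"

text \<open>g^(m)(beta), the value of the bounded extension at g.\<close>
definition deriv_at ::
  "complex set \<Rightarrow> cfun set \<Rightarrow> (cfun \<Rightarrow> cfun \<Rightarrow> complex) \<Rightarrow> cfun \<Rightarrow> complex \<Rightarrow> nat \<Rightarrow> complex" where
  "deriv_at Om H ip g \<beta> m = ip g (kern Om H ip \<beta> m)"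

definition reproducible_multiset ::
  "complex set \<Rightarrow> (cfun \<Rightarrow> cfun \<Rightarrow> complex) \<Rightarrow> complex multiset \<Rightarrow> bool" where
  "reproducible_multiset Om ip Z \<longleftrightarrow>
     (\<forall>\<beta>. \<beta> \<in># Z \<longrightarrow> \<beta> \<noteq> 0 \<longrightarrow> reproducible_order Om ip \<beta> (count Z \<beta> - 1))"

text \<open>Formal determinant D(u; v_1,...,v_N), expanded along the first column.
  Row i (i = 0..N) has first entry w_i (w_0 = u, w_i = v_i) and entries <w_i, v_c>.\<close>
definition Dfun :: "(cfun \<Rightarrow> cfun \<Rightarrow> complex) \<Rightarrow> cfun \<Rightarrow> cfun list \<Rightarrow> cfun" where
  "Dfun ip u vs =
     (let N = length vs;
          w = (\<lambda>i. if i = 0 then u else vs ! (i - 1))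
      in (\<lambda>z. \<Sum>i\<le>N. (-1) ^ i *
               det (mat N N (\<lambda>(r, c). ip (w (if r < i then r else Suc r)) (vs ! c))) * w i z))"

text \<open>The list of kernels k_beta^(j), j < mult(beta),
  is enumerated in some order; the determinant does not depend on the order
  (a simultaneous permutation of rows and columns of the Gram block).\<close>
definition SS_fun ::
  "complex set \<Rightarrow> cfun set \<Rightarrow> (cfun \<Rightarrow> cfun \<Rightarrow> complex) \<Rightarrow> complex multiset \<Rightarrow> cfun" where
  "SS_fun Om H ip Z =
     (let xs = (SOME xs. distinct xs \<and> set xs = {(\<beta>, j). \<beta> \<in># Z \<and> j < count Z \<beta>})
      in Dfun ip (kern Om H ip 0 (count Z 0)) (map (\<lambda>(\<beta>, j). kern Om H ip \<beta> j) xs))"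

definition hclosure :: "cfun set \<Rightarrow> (cfun \<Rightarrow> cfun \<Rightarrow> complex) \<Rightarrow> cfun set \<Rightarrow> cfun set" where
  "hclosure H ip A = {f \<in> H. \<forall>e>0. \<exists>a\<in>A. hnorm ip (\<lambda>z. f z - a z) < e}"

definition invsub :: "cfun set \<Rightarrow> (cfun \<Rightarrow> cfun \<Rightarrow> complex) \<Rightarrow> cfun \<Rightarrow> cfun set" where
  "invsub H ip g = hclosure H ip {(\<lambda>z. \<Sum>k<n. c k * z ^ k * g z) | n c. True}"

definition proj :: "(cfun \<Rightarrow> cfun \<Rightarrow> complex) \<Rightarrow> cfun set \<Rightarrow> cfun \<Rightarrow> cfun" where
  "proj ip V x = (THE v. v \<in> V \<and> (\<forall>w\<in>V. ip (\<lambda>z. x z - v z) w = 0))"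

end

theory Submission
  imports Defs "HOL-Computational_Algebra.Fundamental_Theorem_Algebra"
begin

abbreviation addf :: "cfun \<Rightarrow> cfun \<Rightarrow> cfun" where "addf f g \<equiv> (\<lambda>z. f z + g z)"
abbreviation subf :: "cfun \<Rightarrow> cfun \<Rightarrow> cfun" where "subf f g \<equiv> (\<lambda>z. f z - g z)"
abbreviation sclf :: "complex \<Rightarrow> cfun \<Rightarrow> cfun" where "sclf c f \<equiv> (\<lambda>z. c * f z)"
abbreviation zf :: cfun where "zf \<equiv> (\<lambda>z. 0)"

locale hs =
  fixes Om :: "complex set" and H :: "cfun set" and ip :: "cfun \<Rightarrow> cfun \<Rightarrow> complex"
  assumes setting: "setting Om H ip"
begin

abbreviation "nrm \<equiv> hnorm ip"

lemma S: "open Om \<and>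
     connected Om \<and> 0 \<in> Om \<and>
     (\<forall>f\<in>H. f holomorphic_on Om \<and> (\<forall>z. z \<notin> Om \<longrightarrow> f z = 0)) \<and>
     (\<lambda>z. 0) \<in> H \<and>
     (\<forall>f\<in>H. \<forall>g\<in>H. (\<lambda>z. f z + g z) \<in> H) \<and>
     (\<forall>f\<in>H. \<forall>c. (\<lambda>z. c * f z) \<in> H) \<and>
     (\<forall>f\<in>H. \<forall>g\<in>H. \<forall>h\<in>H. ip (\<lambda>z. f z + g z) h = ip f h + ip g h) \<and>
     (\<forall>f\<in>H. \<forall>g\<in>H. \<forall>c. ip (\<lambda>z. c * f z) g = c * ip f g) \<and>
     (\<forall>f\<in>H. \<forall>g\<in>H. ip g f = cnj (ip f g)) \<and>
     (\<forall>f\<in>H. Im (ip f f) = 0 \<and> Re (ip f f) \<ge> 0) \<and>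
     (\<forall>f\<in>H. ip f f = 0 \<longrightarrow> f = (\<lambda>z. 0)) \<and>
     (\<forall>X. (\<forall>n. X n \<in> H) \<and>
          (\<forall>e>0. \<exists>N. \<forall>m\<ge>N. \<forall>n\<ge>N. hnorm ip (\<lambda>z. X m z - X n z) < e) \<longrightarrow>
          (\<exists>f\<in>H. (\<lambda>n. hnorm ip (\<lambda>z. X n z - f z)) \<longlonglongrightarrow> 0)) \<and>
     (\<forall>w\<in>Om. \<exists>C. \<forall>f\<in>H. cmod (f w) \<le> C * hnorm ip f) \<and>
     (\<forall>f\<in>H. shift Om f \<in> H) \<and>
     (\<exists>C. \<forall>f\<in>H. hnorm ip (shift Om f) \<le> C * hnorm ip f) \<and>
     (\<forall>p. polyfun Om p \<in> H) \<and>
     (\<forall>f\<in>H. \<forall>e>0. \<exists>p. hnorm ip (\<lambda>z. f z - polyfun Om p z) < e)"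
  using setting unfolding setting_def .

lemma Om_open: "open Om"
  using S by blast
lemma Om_conn: "connected Om"
  using S by blast
lemma zero_Om: "0 \<in> Om"
  using S by blast

lemma H_holo: "f \<in> H \<Longrightarrow> f holomorphic_on Om"
  using S by meson
lemma H_out: "f \<in> H \<Longrightarrow> z \<notin> Om \<Longrightarrow> f z = 0"
  using S by meson
lemma H_zero[simp,intro]: "zf \<in> H"
  using S by meson
lemma H_add[intro]: "f \<in> H \<Longrightarrow> g \<in> H \<Longrightarrow> addf f g \<in> H"
  using S by meson
lemma H_scl[intro]: "f \<in> H \<Longrightarrow> sclf c f \<in> H"
  using S by meson
lemma ip_add1: "f \<in> H \<Longrightarrow> g \<in> H \<Longrightarrow> h \<in> H \<Longrightarrow> ip (addf f g) h = ip f h + ip g h"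
  using S by meson
lemma ip_scl1: "f \<in> H \<Longrightarrow> g \<in> H \<Longrightarrow> ip (sclf c f) g = c * ip f g"
  using S by meson
lemma ip_sym: "f \<in> H \<Longrightarrow> g \<in> H \<Longrightarrow> ip g f = cnj (ip f g)"
  using S by meson
lemma ip_self_Im: "f \<in> H \<Longrightarrow> Im (ip f f) = 0"
  using S by meson
lemma ip_self_Re: "f \<in> H \<Longrightarrow> Re (ip f f) \<ge> 0"
  using S by meson
lemma ip_self_zero: "f \<in> H \<Longrightarrow> ip f f = 0 \<Longrightarrow> f = zf"
  using S by meson
lemma complete_all: "(\<forall>X. (\<forall>n. X n \<in> H) \<and>
          (\<forall>e>0. \<exists>N. \<forall>m\<ge>N. \<forall>n\<ge>N. hnorm ip (\<lambda>z. X m z - X n z) < e) \<longrightarrow>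
          (\<exists>f\<in>H. (\<lambda>n. hnorm ip (\<lambda>z. X n z - f z)) \<longlonglongrightarrow> 0))"
  by (insert S, elim conjE, assumption)

lemma complete: "(\<forall>n. X n \<in> H) \<Longrightarrow>
          (\<forall>e>0. \<exists>N. \<forall>m\<ge>N. \<forall>n\<ge>N. nrm (\<lambda>z. X m z - X n z) < e) \<Longrightarrow>
          (\<exists>f\<in>H. (\<lambda>n. nrm (\<lambda>z. X n z - f z)) \<longlonglongrightarrow> 0)"
  using complete_all by blast
lemma pointeval: "w \<in> Om \<Longrightarrow> \<exists>C. \<forall>f\<in>H. cmod (f w) \<le> C * nrm f"
  using S by meson
lemma shift_H: "f \<in> H \<Longrightarrow> shift Om f \<in> H"
  using S by meson
lemma shift_bdd: "\<exists>C. \<forall>f\<in>H. nrm (shift Om f) \<le> C * nrm f"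
  using S by meson
lemma poly_H[simp,intro]: "polyfun Om p \<in> H"
  using S by meson
lemma poly_dense: "f \<in> H \<Longrightarrow> e > 0 \<Longrightarrow> \<exists>p. nrm (\<lambda>z. f z - polyfun Om p z) < e"
  using S by meson

lemma H_sub[intro]: "f \<in> H \<Longrightarrow> g \<in> H \<Longrightarrow> subf f g \<in> H"
proof -
  assume "f \<in> H" "g \<in> H"
  then have "addf f (sclf (-1) g) \<in> H" by (intro H_add H_scl)
  moreover have "addf f (sclf (-1) g) = subf f g" by auto
  ultimately show ?thesis by simp
qed

lemma H_neg[intro]: "f \<in> H \<Longrightarrow> (\<lambda>z. - f z) \<in> H"
  using H_scl[of f "-1"] by simp

lemma ip_add2: "f \<in> H \<Longrightarrow> g \<in> H \<Longrightarrow> h \<in> H \<Longrightarrow> ip f (addf g h) = ip f g + ip f h"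
  by (subst ip_sym, auto simp: ip_add1 ip_sym[of f g] ip_sym[of f h])

lemma ip_scl2: "f \<in> H \<Longrightarrow> g \<in> H \<Longrightarrow> ip f (sclf c g) = cnj c * ip f g"
  by (subst ip_sym, auto simp: ip_scl1 ip_sym[of f g])

lemma ip_zero1[simp]: "g \<in> H \<Longrightarrow> ip zf g = 0"
  using ip_scl1[of zf g 0] by simp

lemma ip_zero2[simp]: "g \<in> H \<Longrightarrow> ip g zf = 0"
  using ip_scl2[of g zf 0] by simp

lemma ip_sub1: "f \<in> H \<Longrightarrow> g \<in> H \<Longrightarrow> h \<in> H \<Longrightarrow> ip (subf f g) h = ip f h - ip g h"
proof -
  assume a: "f \<in> H" "g \<in> H" "h \<in> H"
  have "subf f g = addf f (sclf (-1) g)" by auto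
  then have "ip (subf f g) h = ip f h + ip (sclf (-1) g) h" using a ip_add1[of f "sclf (-1) g" h] H_scl by metis
  then show ?thesis using a ip_scl1[of g h "-1"] by simp
qed

lemma ip_sub2: "f \<in> H \<Longrightarrow> g \<in> H \<Longrightarrow> h \<in> H \<Longrightarrow> ip f (subf g h) = ip f g - ip f h"
  by (subst ip_sym, auto simp: ip_sub1 ip_sym[of f g] ip_sym[of f h])

lemma ip_sum1:
  assumes "finite I" "\<And>i. i \<in> I \<Longrightarrow> F i \<in> H" "g \<in> H"
  shows "(\<lambda>z. \<Sum>i\<in>I. c i * F i z) \<in> H \<and> ip (\<lambda>z. \<Sum>i\<in>I. c i * F i z) g = (\<Sum>i\<in>I. c i * ip (F i) g)"
  using assms
proof (induction I rule: finite_induct)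
  case empty then show ?case by simp
next
  case (insert x I)
  have e: "(\<lambda>z. \<Sum>i\<in>insert x I. c i * F i z) = addf (sclf (c x) (F x)) (\<lambda>z. \<Sum>i\<in>I. c i * F i z)"
    using insert by auto
  have SH: "(\<lambda>z. \<Sum>i\<in>I. c i * F i z) \<in> H" and ipS: "ip (\<lambda>z. \<Sum>i\<in>I. c i * F i z) g = (\<Sum>i\<in>I. c i * ip (F i) g)" using insert by auto
  have FH: "sclf (c x) (F x) \<in> H" using insert by auto
  have 1: "ip (addf (sclf (c x) (F x)) (\<lambda>z. \<Sum>i\<in>I. c i * F i z)) g = c x * ip (F x) g + (\<Sum>i\<in>I. c i * ip (F i) g)"
    using ip_add1[OF FH SH insert(5)] ip_scl1[of "F x" g "c x"] insert ipS by simp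
  have 2: "addf (sclf (c x) (F x)) (\<lambda>z. \<Sum>i\<in>I. c i * F i z) \<in> H" using FH SH by (rule H_add)
  show ?case unfolding e using 1 2 insert by simp
qed

lemma ip_self_real: "f \<in> H \<Longrightarrow> ip f f = of_real (nrm f ^ 2)"
  unfolding hnorm_def using ip_self_Im ip_self_Re by (simp add: complex_eq_iff)

lemma nrm_nonneg[simp]: "nrm f \<ge> 0" if "f \<in> H"
  unfolding hnorm_def using ip_self_Re[OF that] by simp

lemma nrm_zero_iff: "f \<in> H \<Longrightarrow> nrm f = 0 \<longleftrightarrow> f = zf"
proof
  assume "f \<in> H" "nrm f = 0"
  then have "ip f f = 0" using ip_self_real by simp
  then show "f = zf" using ip_self_zero \<open>f\<in>H\<close> by blast
next
  assume "f = zf" then show "nrm f = 0" by (simp add: hnorm_def)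
qed

lemma nrm_scl: "f \<in> H \<Longrightarrow> nrm (sclf c f) = cmod c * nrm f"
proof -
  assume f: "f \<in> H"
  have cf: "sclf c f \<in> H" using f by (rule H_scl)
  have "ip (sclf c f) (sclf c f) = c * (cnj c * ip f f)"
    using ip_scl1[OF f cf] ip_scl2[OF f f] by simp
  also have "\<dots> = of_real ((cmod c)^2 * nrm f ^ 2)"
    using ip_self_real[OF f] complex_norm_square[of c] by simp
  finally have "(of_real (nrm (sclf c f) ^ 2)::complex) = of_real (((cmod c) * nrm f) ^ 2)"
    using ip_self_real[OF cf] by (simp add: power_mult_distrib)
  then have "nrm (sclf c f) ^ 2 = ((cmod c) * nrm f) ^ 2" using of_real_eq_iff by blast
  then show ?thesis using nrm_nonneg[OF f] nrm_nonneg[OF cf]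
    by (meson power2_eq_imp_eq mult_nonneg_nonneg norm_ge_zero)
qed

lemma ip_subsub: "a \<in> H \<Longrightarrow> b \<in> H \<Longrightarrow> ip (subf a b) (subf a b) = ip a a - ip a b - ip b a + ip b b"
proof -
  assume a: "a \<in> H" and b: "b \<in> H"
  have ab: "subf a b \<in> H" using a b by (rule H_sub)
  have "ip (subf a b) (subf a b) = ip a (subf a b) - ip b (subf a b)" using ip_sub1[OF a b ab] .
  also have "\<dots> = (ip a a - ip a b) - (ip b a - ip b b)" using ip_sub2[OF a a b] ip_sub2[OF b a b] by simp
  finally show ?thesis by simp
qed

lemma ip_addadd: "a \<in> H \<Longrightarrow> b \<in> H \<Longrightarrow> ip (addf a b) (addf a b) = ip a a + ip a b + ip b a + ip b b"
proof -
  assume a: "a \<in> H" and b: "b \<in> H"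
  have ab: "addf a b \<in> H" using a b by (rule H_add)
  have "ip (addf a b) (addf a b) = ip a (addf a b) + ip b (addf a b)" using ip_add1[OF a b ab] .
  also have "\<dots> = (ip a a + ip a b) + (ip b a + ip b b)" using ip_add2[OF a a b] ip_add2[OF b a b] by simp
  finally show ?thesis by simp
qed

lemma cauchy_schwarz:
  assumes f: "f \<in> H" and g: "g \<in> H"
  shows "cmod (ip f g) \<le> nrm f * nrm g"
proof (cases "g = zf")
  case True then show ?thesis using f by simp
next
  case False
  define \<gamma> where "\<gamma> = nrm g ^ 2"
  have gp: "\<gamma> > 0" using False g nrm_zero_iff nrm_nonneg unfolding \<gamma>_def by fastforce
  define a where "a = ip f g"
  define t where "t = a / of_real \<gamma>"
  define b where "b = sclf t g"
  have bH: "b \<in> H" unfolding b_def using g by (rule H_scl)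
  have hH: "subf f b \<in> H" using f bH by (rule H_sub)
  have 1: "ip f b = cnj t * a" unfolding b_def a_def using ip_scl2[OF f g] .
  have 2: "ip b f = t * cnj a" unfolding b_def a_def using ip_scl1[OF g f] ip_sym[OF f g] by simp
  have 3: "ip b b = t * cnj t * of_real \<gamma>" unfolding b_def \<gamma>_def
    using ip_scl1[OF g bH[unfolded b_def]] ip_scl2[OF g g] ip_self_real[OF g] by simp
  have "ip (subf f b) (subf f b) = of_real (nrm f ^ 2) - cnj t * a - t * cnj a + t * cnj t * of_real \<gamma>"
    using ip_subsub[OF f bH] 1 2 3 ip_self_real[OF f] by simp
  also have "\<dots> = of_real (nrm f ^ 2) - of_real ((cmod a)^2 / \<gamma>)"
  proof -
    have c: "cnj a * a = of_real ((cmod a)^2)" by (metis complex_norm_square mult.commute of_real_power)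
    have "cnj t * a = of_real ((cmod a)^2 / \<gamma>)" unfolding t_def using c by (simp add: field_simps)
    moreover have "t * cnj a = of_real ((cmod a)^2 / \<gamma>)" unfolding t_def using c by (simp add: field_simps mult.commute)
    moreover have "t * cnj t * of_real \<gamma> = of_real ((cmod a)^2 / \<gamma>)" unfolding t_def using c gp
      by (simp add: field_simps power2_eq_square)
    ultimately show ?thesis by simp
  qed
  finally have "0 \<le> nrm f ^ 2 - (cmod a)^2 / \<gamma>"
    using ip_self_Re[OF hH] by simp
  then have "(cmod a)^2 \<le> nrm f ^ 2 * nrm g ^ 2"
    using gp unfolding \<gamma>_def by (simp add: field_simps)
  then have "(cmod a)^2 \<le> (nrm f * nrm g) ^ 2" by (simp add: power_mult_distrib)
  then show ?thesis unfolding a_def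
    using nrm_nonneg[OF f] nrm_nonneg[OF g] by (meson power2_le_imp_le mult_nonneg_nonneg)
qed

lemma nrm_add: "f \<in> H \<Longrightarrow> g \<in> H \<Longrightarrow> nrm (addf f g) \<le> nrm f + nrm g"
proof -
  assume f: "f \<in> H" and g: "g \<in> H"
  have fg: "addf f g \<in> H" using f g by (rule H_add)
  have "ip (addf f g) (addf f g) = ip f f + ip g g + (ip f g + cnj (ip f g))"
    using ip_addadd[OF f g] ip_sym[OF f g] by simp
  then have "(of_real (nrm (addf f g) ^ 2) :: complex) = of_real (nrm f ^ 2 + nrm g ^ 2 + 2 * Re (ip f g))"
    using ip_self_real[OF f] ip_self_real[OF g] ip_self_real[OF fg] by (simp add: complex_add_cnj)
  then have "nrm (addf f g) ^ 2 = nrm f ^ 2 + nrm g ^ 2 + 2 * Re (ip f g)"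
    using of_real_eq_iff by blast
  also have "\<dots> \<le> nrm f ^ 2 + nrm g ^ 2 + 2 * (nrm f * nrm g)"
    using cauchy_schwarz[OF f g] complex_Re_le_cmod[of "ip f g"] by linarith
  also have "\<dots> = (nrm f + nrm g)^2" by (simp add: power2_sum)
  finally show ?thesis using f g
    by (meson add_nonneg_nonneg nrm_nonneg power2_le_imp_le)
qed

lemma nrm_sub_sym: "f \<in> H \<Longrightarrow> g \<in> H \<Longrightarrow> nrm (subf f g) = nrm (subf g f)"
proof -
  assume f: "f \<in> H" and g: "g \<in> H"
  have e: "subf g f = sclf (-1) (subf f g)" by (rule ext, simp)
  show ?thesis unfolding e nrm_scl[OF H_sub[OF f g]] by simp
qed

lemma nrm_tri: "f \<in> H \<Longrightarrow> g \<in> H \<Longrightarrow> h \<in> H \<Longrightarrow> nrm (subf f h) \<le> nrm (subf f g) + nrm (subf g h)"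
proof -
  assume a: "f \<in> H" "g \<in> H" "h \<in> H"
  have "subf f h = addf (subf f g) (subf g h)" by auto
  then show ?thesis using nrm_add a H_sub by metis
qed

lemma nrm_neg: "g \<in> H \<Longrightarrow> nrm (\<lambda>z. - g z) = nrm g"
  using nrm_scl[of g "-1"] by simp

lemma nrm_sub_le: "f \<in> H \<Longrightarrow> g \<in> H \<Longrightarrow> nrm (subf f g) \<le> nrm f + nrm g"
  using nrm_tri[of f zf g] nrm_neg[of g] by simp

lemma ip_cont_bound: "f \<in> H \<Longrightarrow> g \<in> H \<Longrightarrow> k \<in> H \<Longrightarrow> cmod (ip f k - ip g k) \<le> nrm (subf f g) * nrm k"
  using cauchy_schwarz[of "subf f g" k] ip_sub1 by (simp add: H_sub)

end


context hs begin

definition csub :: "cfun set \<Rightarrow> bool" where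
  "csub V \<longleftrightarrow> V \<subseteq> H \<and> zf \<in> V \<and> (\<forall>f\<in>V. \<forall>g\<in>V. addf f g \<in> V) \<and> (\<forall>f\<in>V. \<forall>c. sclf c f \<in> V) \<and>
     (\<forall>f\<in>H. (\<forall>e>0. \<exists>g\<in>V. nrm (subf f g) < e) \<longrightarrow> f \<in> V)"

lemma csubD:
  assumes "csub V"
  shows "V \<subseteq> H" "zf \<in> V" "f \<in> V \<Longrightarrow> g \<in> V \<Longrightarrow> addf f g \<in> V" "f \<in> V \<Longrightarrow> sclf c f \<in> V"
    "f \<in> H \<Longrightarrow> (\<And>e. e > 0 \<Longrightarrow> \<exists>g\<in>V. nrm (subf f g) < e) \<Longrightarrow> f \<in> V"
  using assms unfolding csub_def by blast+

lemma csub_sub: "csub V \<Longrightarrow> f \<in> V \<Longrightarrow> g \<in> V \<Longrightarrow> subf f g \<in> V"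
proof -
  assume V: "csub V" "f \<in> V" "g \<in> V"
  have "addf f (sclf (-1) g) \<in> V" using V csubD by blast
  moreover have "addf f (sclf (-1) g) = subf f g" by auto
  ultimately show ?thesis by simp
qed

lemma sq_real_lemma:
  "f \<in> H \<Longrightarrow> Re (ip f f) = nrm f ^ 2"
  using ip_self_real by simp

lemma parallelogram:
  assumes a: "a \<in> H" and b: "b \<in> H"
  shows "nrm (subf a b) ^ 2 + nrm (addf a b) ^ 2 = 2 * nrm a ^ 2 + 2 * nrm b ^ 2"
proof -
  have "ip (subf a b) (subf a b) + ip (addf a b) (addf a b) = 2 * ip a a + 2 * ip b b"
    using ip_subsub[OF a b] ip_addadd[OF a b] by simp
  then have "Re (ip (subf a b) (subf a b)) + Re (ip (addf a b) (addf a b)) = 2 * Re (ip a a) + 2 * Re (ip b b)"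
    by (metis plus_complex.sel(1) Re_complex_of_real mult_2 )
  then show ?thesis using sq_real_lemma a b H_sub H_add by simp
qed

lemma cs_identity:
  assumes f: "f \<in> H" and g: "g \<in> H" and gn: "g \<noteq> zf"
  shows "nrm (subf f (sclf (ip f g / of_real (nrm g ^ 2)) g)) ^ 2 = nrm f ^ 2 - (cmod (ip f g))^2 / nrm g ^ 2"
proof -
  define \<gamma> where "\<gamma> = nrm g ^ 2"
  have gp: "\<gamma> > 0" using gn g nrm_zero_iff nrm_nonneg unfolding \<gamma>_def by fastforce
  define a where "a = ip f g"
  define t where "t = a / of_real \<gamma>"
  define b where "b = sclf t g"
  have bH: "b \<in> H" unfolding b_def using g by (rule H_scl)
  have hH: "subf f b \<in> H" using f bH by (rule H_sub)
  have 1: "ip f b = cnj t * a" unfolding b_def a_def using ip_scl2[OF f g] .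
  have 2: "ip b f = t * cnj a" unfolding b_def a_def using ip_scl1[OF g f] ip_sym[OF f g] by simp
  have 3: "ip b b = t * cnj t * of_real \<gamma>" unfolding b_def \<gamma>_def
    using ip_scl1[OF g bH[unfolded b_def]] ip_scl2[OF g g] ip_self_real[OF g] by simp
  have "ip (subf f b) (subf f b) = of_real (nrm f ^ 2) - cnj t * a - t * cnj a + t * cnj t * of_real \<gamma>"
    using ip_subsub[OF f bH] 1 2 3 ip_self_real[OF f] by simp
  also have "\<dots> = of_real (nrm f ^ 2) - of_real ((cmod a)^2 / \<gamma>)"
  proof -
    have c: "cnj a * a = of_real ((cmod a)^2)" by (metis complex_norm_square mult.commute of_real_power)
    have "cnj t * a = of_real ((cmod a)^2 / \<gamma>)" unfolding t_def using c by (simp add: field_simps)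
    moreover have "t * cnj a = of_real ((cmod a)^2 / \<gamma>)" unfolding t_def using c by (simp add: field_simps mult.commute)
    moreover have "t * cnj t * of_real \<gamma> = of_real ((cmod a)^2 / \<gamma>)" unfolding t_def using c gp
      by (simp add: field_simps power2_eq_square)
    ultimately show ?thesis by simp
  qed
  finally have "Re (ip (subf f b) (subf f b)) = nrm f ^ 2 - (cmod a)^2 / \<gamma>" by simp
  then show ?thesis using sq_real_lemma[OF hH] unfolding b_def t_def a_def \<gamma>_def by simp
qed

lemma nrm_subf_poly: "nrm (subf f g) \<ge> 0" if "f \<in> H" "g \<in> H"
  using that H_sub nrm_nonneg by blast

theorem projection_exists:
  assumes V: "csub V" and x: "x \<in> H"
  shows "\<exists>v\<in>V. \<forall>w\<in>V. ip (subf x v) w = 0"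
proof -
  have VH: "V \<subseteq> H" using csubD[OF V] by blast
  define D where "D = (\<lambda>v. nrm (subf x v)) ` V"
  define \<delta> where "\<delta> = Inf D"
  have Dne: "D \<noteq> {}" unfolding D_def using csubD(2)[OF V] by blast
  have Dbdd: "bdd_below D" unfolding D_def bdd_below_def using VH x nrm_subf_poly by blast
  have dle: "\<delta> \<le> nrm (subf x v)" if "v \<in> V" for v
    unfolding \<delta>_def D_def using Dbdd that by (simp add: D_def cInf_lower)
  have d0: "\<delta> \<ge> 0"
  proof -
    have "\<forall>y\<in>D. 0 \<le> y" unfolding D_def using VH x nrm_subf_poly by blast
    then show ?thesis unfolding \<delta>_def using cInf_greatest[OF Dne] by blast
  qed
  have "\<exists>v\<in>V. nrm (subf x v) < \<delta> + 1 / (real n + 1)" for n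
  proof -
    have "Inf D < \<delta> + 1 / (real n + 1)" unfolding \<delta>_def by (simp add: add_pos_pos)
    then show ?thesis using cInf_less_iff[OF Dne Dbdd] unfolding D_def by blast
  qed
  then obtain m where mV: "\<And>n. m n \<in> V" and mlt: "\<And>n. nrm (subf x (m n)) < \<delta> + 1 / (real n + 1)"
    by metis
  have mH: "m n \<in> H" for n using mV VH by blast
  define K where "K = 2 * (2 * \<delta> + 1)"
  have Kp: "K > 0" unfolding K_def using d0 by simp
  have sq: "nrm (subf x (m n)) ^ 2 \<le> \<delta>^2 + (2*\<delta>+1) / (real n + 1)" for n
  proof -
    have e: "1 / (real n + 1) \<le> 1" by simp
    have "nrm (subf x (m n)) ^ 2 \<le> (\<delta> + 1 / (real n + 1))^2"
      using mlt[of n] nrm_subf_poly[OF x mH] by (meson less_imp_le power_mono)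
    also have "\<dots> = \<delta>^2 + (2*\<delta> + 1 / (real n + 1)) * (1 / (real n + 1))" by (simp add: power2_eq_square algebra_simps)
    also have "\<dots> \<le> \<delta>^2 + (2*\<delta>+1) * (1 / (real n + 1))" using e by (intro add_left_mono mult_right_mono; auto)
    also have "\<dots> = \<delta>^2 + (2*\<delta>+1) / (real n + 1)" by simp
    finally show ?thesis .
  qed
  have cauchy_sq: "nrm (subf (m j) (m k)) ^ 2 \<le> K / (real j + 1) + K / (real k + 1)" for j k
  proof -
    define a where "a = subf x (m j)"
    define b where "b = subf x (m k)"
    have aH: "a \<in> H" and bH: "b \<in> H" unfolding a_def b_def using x mH by auto
    define mid where "mid = sclf (1/2) (addf (m j) (m k))"
    have midV: "mid \<in> V" unfolding mid_def using mV csubD[OF V] by blast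
    have e1: "subf a b = subf (m k) (m j)" unfolding a_def b_def by auto
    have e2: "addf a b = sclf 2 (subf x mid)" unfolding a_def b_def mid_def by (auto simp: field_simps)
    have midH: "mid \<in> H" using midV VH by blast
    have "nrm (sclf 2 (subf x mid)) = cmod 2 * nrm (subf x mid)" by (rule nrm_scl[OF H_sub[OF x midH]])
    then have "nrm (addf a b) = 2 * nrm (subf x mid)" unfolding e2 by simp
    then have "nrm (addf a b) ^ 2 \<ge> 4 * \<delta>^2" using dle[OF midV] d0
      by (simp add: power_mono power_mult_distrib)
    moreover have "nrm (subf a b) ^ 2 + nrm (addf a b) ^ 2 = 2 * nrm a ^ 2 + 2 * nrm b ^ 2"
      by (rule parallelogram[OF aH bH])
    ultimately have "nrm (subf (m k) (m j)) ^ 2 \<le> 2 * nrm a ^ 2 + 2 * nrm b ^ 2 - 4 * \<delta>^2" unfolding e1 by linarith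
    also have "\<dots> \<le> 2 * (\<delta>^2 + (2*\<delta>+1) / (real j + 1)) + 2 * (\<delta>^2 + (2*\<delta>+1) / (real k + 1)) - 4 * \<delta>^2"
    proof -
      have "nrm a ^ 2 \<le> \<delta>^2 + (2*\<delta>+1) / (real j + 1)" using sq[of j] unfolding a_def .
      moreover have "nrm b ^ 2 \<le> \<delta>^2 + (2*\<delta>+1) / (real k + 1)" using sq[of k] unfolding b_def .
      ultimately show ?thesis by (intro diff_right_mono add_mono mult_left_mono; simp)
    qed
    also have "\<dots> = K / (real j + 1) + K / (real k + 1)" unfolding K_def by (simp add: distrib_left times_divide_eq_right)
    finally show ?thesis using nrm_sub_sym mH by metis
  qed
  have cauchy: "\<forall>e>0. \<exists>N. \<forall>j\<ge>N. \<forall>k\<ge>N. nrm (subf (m j) (m k)) < e"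
  proof (intro allI impI)
    fix e :: real assume e: "e > 0"
    obtain N :: nat where N: "2 * K / e^2 < real N" using reals_Archimedean2 by blast
    show "\<exists>N. \<forall>j\<ge>N. \<forall>k\<ge>N. nrm (subf (m j) (m k)) < e"
    proof (intro exI allI impI)
      fix j k assume j: "N \<le> j" and k: "N \<le> k"
      have ep: "e^2 > 0" using e by simp
      have "K / (real j + 1) \<le> K / (real N + 1)" using j Kp by (simp add: frac_le)
      moreover have "K / (real k + 1) \<le> K / (real N + 1)" using k Kp by (simp add: frac_le)
      moreover have "2 * K / (real N + 1) < e^2"
      proof -
        have "2 * K < e^2 * real N" using N ep by (simp add: field_simps)
        moreover have "e^2 * (real N + 1) = e^2 * real N + e^2" by (simp add: algebra_simps)
        ultimately have "2 * K < e^2 * (real N + 1)" using ep by linarith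
        then show ?thesis using ep by (simp add: field_simps add_pos_pos)
      qed
      ultimately have "nrm (subf (m j) (m k)) ^ 2 < e^2" using cauchy_sq[of j k] by simp
      then show "nrm (subf (m j) (m k)) < e" using e by (simp add: power_less_imp_less_base)
    qed
  qed
  obtain v where vH: "v \<in> H" and lim: "(\<lambda>n. nrm (subf (m n) v)) \<longlonglongrightarrow> 0"
    using complete[of m] mH cauchy by blast
  have vV: "v \<in> V"
  proof (rule csubD(5)[OF V vH])
    fix e :: real assume e: "e > 0"
    have "eventually (\<lambda>n. nrm (subf (m n) v) < e) sequentially" using lim e by (rule order_tendstoD)
    then obtain n where "nrm (subf (m n) v) < e" unfolding eventually_sequentially by blast
    then show "\<exists>g\<in>V. nrm (subf v g) < e" using mV nrm_sub_sym mH vH by metis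
  qed
  have vmin: "nrm (subf x v) \<le> \<delta>"
  proof (rule ccontr)
    assume "\<not> ?thesis"
    then have gap: "nrm (subf x v) - \<delta> > 0" by simp
    define e where "e = (nrm (subf x v) - \<delta>) / 2"
    have e: "e > 0" using gap unfolding e_def by simp
    have "eventually (\<lambda>n. nrm (subf (m n) v) < e) sequentially" using lim e by (rule order_tendstoD)
    then obtain N1 where N1: "\<forall>n\<ge>N1. nrm (subf (m n) v) < e" unfolding eventually_sequentially by blast
    obtain N2 :: nat where N2: "1 / e < real N2" using reals_Archimedean2 by blast
    define n where "n = max N1 N2"
    have "1 / (real n + 1) < e"
    proof -
      have "1 / e < real n + 1" using N2 unfolding n_def by linarith
      then show ?thesis using e by (simp add: field_simps)
    qed
    then have "nrm (subf x (m n)) < \<delta> + e" using mlt[of n] by linarith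
    moreover have "nrm (subf (m n) v) < e" using N1 unfolding n_def by simp
    moreover have "nrm (subf x v) \<le> nrm (subf x (m n)) + nrm (subf (m n) v)"
      by (rule nrm_tri[OF x mH vH])
    ultimately have "nrm (subf x v) < \<delta> + e + e" by linarith
    moreover have "\<delta> + e + e = nrm (subf x v)" unfolding e_def by simp
    ultimately show False by simp
  qed
  have orth: "ip (subf x v) w = 0" if wV: "w \<in> V" for w
  proof (rule ccontr)
    assume ne: "ip (subf x v) w \<noteq> 0"
    have wH: "w \<in> H" using wV VH by blast
    have wn: "w \<noteq> zf" using ne wH ip_zero2[OF H_sub[OF x vH]] by auto
    define t where "t = ip (subf x v) w / of_real (nrm w ^ 2)"
    have xv: "subf x v \<in> H" using x vH by auto
    have id: "nrm (subf (subf x v) (sclf t w)) ^ 2 = nrm (subf x v) ^ 2 - (cmod (ip (subf x v) w))^2 / nrm w ^ 2"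
      unfolding t_def by (rule cs_identity[OF xv wH wn])
    have wp: "nrm w ^ 2 > 0" using wn wH nrm_zero_iff nrm_nonneg by (metis less_eq_real_def zero_less_power)
    have "(cmod (ip (subf x v) w))^2 / nrm w ^ 2 > 0" using ne wp by simp
    then have lt: "nrm (subf (subf x v) (sclf t w)) ^ 2 < \<delta> ^ 2"
      using id vmin nrm_subf_poly[OF x vH] by (smt (verit) power_mono)
    have v2: "addf v (sclf t w) \<in> V" using vV wV csubD[OF V] by blast
    have "subf (subf x v) (sclf t w) = subf x (addf v (sclf t w))" by auto
    then have "\<delta> \<le> nrm (subf (subf x v) (sclf t w))" using dle[OF v2] by simp
    then have "\<delta>^2 \<le> nrm (subf (subf x v) (sclf t w)) ^ 2" using d0 by (simp add: power_mono)
    then show False using lt by simp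
  qed
  show ?thesis using vV orth by blast
qed

lemma proj_unique:
  assumes V: "csub V" and x: "x \<in> H" and v: "v \<in> V" and o: "\<forall>w\<in>V. ip (subf x v) w = 0"
  shows "proj ip V x = v"
  unfolding proj_def
proof (rule the_equality)
  show "v \<in> V \<and> (\<forall>w\<in>V. ip (subf x v) w = 0)" using v o by blast
next
  fix u assume u: "u \<in> V \<and> (\<forall>w\<in>V. ip (subf x u) w = 0)"
  have VH: "V \<subseteq> H" using csubD[OF V] by blast
  have uH: "u \<in> H" and vH: "v \<in> H" using u v VH by auto
  have d: "subf v u \<in> V" using csub_sub[OF V] u v by blast
  have "ip (subf x u) (subf v u) = 0" "ip (subf x v) (subf v u) = 0" using u o d by auto
  then have "ip (subf (subf x u) (subf x v)) (subf v u) = 0"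
    using ip_sub1[OF H_sub[OF x uH] H_sub[OF x vH], of "subf v u"] d VH by auto
  moreover have "subf (subf x u) (subf x v) = subf v u" by auto
  ultimately have "ip (subf v u) (subf v u) = 0" by simp
  then have "subf v u = zf" using ip_self_zero vH uH by auto
  then show "u = v" by (metis (no_types, lifting) ext eq_iff_diff_eq_0)
qed

end


lemma polyfun_add: "polyfun Om (p + q) = addf (polyfun Om p) (polyfun Om q)"
  by (rule ext) (simp add: polyfun_def)
lemma polyfun_diff: "polyfun Om (p - q) = subf (polyfun Om p) (polyfun Om q)"
  by (rule ext) (simp add: polyfun_def)
lemma polyfun_smult: "polyfun Om (Polynomial.smult c p) = sclf c (polyfun Om p)"
  by (rule ext) (simp add: polyfun_def)
lemma polyfun_0: "polyfun Om 0 = zf"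
  by (rule ext) (simp add: polyfun_def)
lemma polyfun_mult: "polyfun Om (p * q) = (\<lambda>z. poly p z * polyfun Om q z)"
  by (rule ext) (simp add: polyfun_def)

lemma funpow_pderiv_add: "(pderiv ^^ m) (p + q) = (pderiv ^^ m) p + (pderiv ^^ m) q"
  by (induction m) (auto simp: pderiv_add)
lemma funpow_pderiv_diff: "(pderiv ^^ m) (p - q) = (pderiv ^^ m) p - (pderiv ^^ m) (q :: complex poly)"
  by (induction m) (auto simp: pderiv_diff)
lemma funpow_pderiv_smult: "(pderiv ^^ m) (Polynomial.smult c p) = Polynomial.smult c ((pderiv ^^ m) p)"
  by (induction m) (auto simp: pderiv_smult)
lemma funpow_pderiv_0: "(pderiv ^^ m) 0 = 0"
  by (induction m) auto

context hs begin

lemma csub_hclosure: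
  assumes AH: "A \<subseteq> H" and z: "zf \<in> A" and add: "\<And>f g. f \<in> A \<Longrightarrow> g \<in> A \<Longrightarrow> addf f g \<in> A"
    and scl: "\<And>f c. f \<in> A \<Longrightarrow> sclf c f \<in> A"
  shows "csub (hclosure H ip A)"
  unfolding csub_def
proof (intro conjI ballI allI impI)
  show "hclosure H ip A \<subseteq> H" unfolding hclosure_def by auto
next
  have "nrm (subf zf zf) = 0" by (simp add: hnorm_def)
  then show "zf \<in> hclosure H ip A" unfolding hclosure_def using z by force
next
  fix f g assume f: "f \<in> hclosure H ip A" and g: "g \<in> hclosure H ip A"
  have fH: "f \<in> H" and gH: "g \<in> H" using f g unfolding hclosure_def by auto
  show "addf f g \<in> hclosure H ip A" unfolding hclosure_def
  proof (intro CollectI conjI allI impI)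
    show "addf f g \<in> H" using fH gH by (rule H_add)
    fix e :: real assume e: "e > 0"
    obtain a where a: "a \<in> A" "nrm (subf f a) < e/2" using f e unfolding hclosure_def by (auto dest: half_gt_zero)
    obtain b where b: "b \<in> A" "nrm (subf g b) < e/2" using g e unfolding hclosure_def by (auto dest: half_gt_zero)
    have aH: "a \<in> H" and bH: "b \<in> H" using a b AH by auto
    have "subf (addf f g) (addf a b) = addf (subf f a) (subf g b)" by (rule ext) simp
    then have "nrm (subf (addf f g) (addf a b)) \<le> nrm (subf f a) + nrm (subf g b)"
      using nrm_add[OF H_sub[OF fH aH] H_sub[OF gH bH]] by simp
    then show "\<exists>c\<in>A. nrm (subf (addf f g) c) < e" using a b add by (intro bexI[of _ "addf a b"]) auto
  qed
next
  fix f c assume f: "f \<in> hclosure H ip A"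
  have fH: "f \<in> H" using f unfolding hclosure_def by auto
  show "sclf c f \<in> hclosure H ip A" unfolding hclosure_def
  proof (intro CollectI conjI allI impI)
    show "sclf c f \<in> H" using fH by (rule H_scl)
    fix e :: real assume e: "e > 0"
    have cp: "cmod c + 1 > 0" using norm_ge_zero[of c] by linarith
    have e': "e / (cmod c + 1) > 0" using e cp by (rule divide_pos_pos)
    obtain a where a: "a \<in> A" "nrm (subf f a) < e / (cmod c + 1)" using f e' unfolding hclosure_def by auto
    have aH: "a \<in> H" using a AH by auto
    have "subf (sclf c f) (sclf c a) = sclf c (subf f a)" by (rule ext) (simp add: algebra_simps)
    then have "nrm (subf (sclf c f) (sclf c a)) = cmod c * nrm (subf f a)"
      using nrm_scl[OF H_sub[OF fH aH]] by simp
    also have "\<dots> \<le> (cmod c + 1) * nrm (subf f a)" using nrm_subf_poly[OF fH aH] by (simp add: mult_right_mono)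
    also have "\<dots> < (cmod c + 1) * (e / (cmod c + 1))" by (rule mult_strict_left_mono[OF a(2) cp])
    also have "\<dots> = e" using cp by simp
    finally have 1: "nrm (subf (sclf c f) (sclf c a)) < e" .
    have 2: "sclf c a \<in> A" using a(1) by (rule scl)
    show "\<exists>b\<in>A. nrm (subf (sclf c f) b) < e"
    proof (rule bexI[of _ "sclf c a"])
      show "nrm (subf (sclf c f) (sclf c a)) < e" by (rule 1)
      show "sclf c a \<in> A" by (rule 2)
    qed
  qed
next
  fix f assume fH: "f \<in> H" and app: "\<forall>e>0. \<exists>g\<in>hclosure H ip A. nrm (subf f g) < e"
  show "f \<in> hclosure H ip A" unfolding hclosure_def
  proof (intro CollectI conjI allI impI fH)
    fix e :: real assume e: "e > 0"
    obtain g where g: "g \<in> hclosure H ip A" "nrm (subf f g) < e/2" using app e by (meson half_gt_zero)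
    have gH: "g \<in> H" using g unfolding hclosure_def by auto
    obtain a where a: "a \<in> A" "nrm (subf g a) < e/2" using g e unfolding hclosure_def by (auto dest: half_gt_zero)
    have aH: "a \<in> H" using a AH by auto
    have "nrm (subf f a) \<le> nrm (subf f g) + nrm (subf g a)" by (rule nrm_tri[OF fH gH aH])
    then show "\<exists>a\<in>A. nrm (subf f a) < e" using a g by (intro bexI[of _ a]) auto
  qed
qed

lemma hclosure_min:
  assumes "csub V" "A \<subseteq> V"
  shows "hclosure H ip A \<subseteq> V"
proof
  fix f assume f: "f \<in> hclosure H ip A"
  show "f \<in> V"
  proof (rule csubD(5)[OF assms(1)])
    show "f \<in> H" using f unfolding hclosure_def by auto
    fix e :: real assume "e > 0"
    then show "\<exists>g\<in>V. nrm (subf f g) < e" using f assms(2) unfolding hclosure_def by blast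
  qed
qed

lemma hclosure_sub:
  assumes AH: "A \<subseteq> H" shows "A \<subseteq> hclosure H ip A"
proof
  fix f assume f: "f \<in> A"
  have "nrm (subf f f) = 0" by (simp add: hnorm_def)
  then show "f \<in> hclosure H ip A" unfolding hclosure_def using AH f by force
qed

lemma dense_zero:
  assumes g: "g \<in> H" and o: "\<And>p. ip (polyfun Om p) g = 0"
  shows "g = zf"
proof -
  have "cmod (ip g g) \<le> e * nrm g" if e: "e > 0" for e
  proof -
    obtain p where p: "nrm (subf g (polyfun Om p)) < e" using poly_dense[OF g e] by blast
    have "cmod (ip g g - ip (polyfun Om p) g) \<le> nrm (subf g (polyfun Om p)) * nrm g"
      by (rule ip_cont_bound[OF g poly_H g])
    also have "\<dots> \<le> e * nrm g" using p g by (simp add: mult_right_mono)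
    finally show ?thesis using o by simp
  qed
  have "cmod (ip g g) \<le> 0"
  proof (rule ccontr)
    assume "\<not> ?thesis"
    then have pos: "cmod (ip g g) > 0" by simp
    define e where "e = cmod (ip g g) / (2 * (nrm g + 1))"
    have np: "nrm g + 1 > 0" using nrm_nonneg[OF g] by linarith
    have e: "e > 0" unfolding e_def using pos np by simp
    have "cmod (ip g g) \<le> e * nrm g" using \<open>\<And>e. e > 0 \<Longrightarrow> _\<close> e by blast
    also have "\<dots> \<le> e * (nrm g + 1)" using e by simp
    also have "\<dots> = cmod (ip g g) / 2" unfolding e_def using np by (simp add: field_simps)
    finally show False using pos by simp
  qed
  then have "ip g g = 0" by simp
  then show ?thesis using ip_self_zero g by blast
qed

theorem riesz_poly:
  fixes L :: "complex poly \<Rightarrow> complex"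
  assumes ladd: "\<And>p q. L (p + q) = L p + L q" and lsm: "\<And>c p. L (Polynomial.smult c p) = c * L p"
    and bdd: "\<And>p. cmod (L p) \<le> C * nrm (polyfun Om p)"
  shows "\<exists>k\<in>H. \<forall>p. ip (polyfun Om p) k = L p"
proof (cases "\<forall>p. L p = 0")
  case True
  then show ?thesis by (intro bexI[of _ zf]) auto
next
  case False
  then obtain p0 where p0: "L p0 \<noteq> 0" by blast
  define p1 where "p1 = Polynomial.smult (1 / L p0) p0"
  have Lp1: "L p1 = 1" unfolding p1_def lsm using p0 by simp
  have ldiff: "L (p - q) = L p - L q" for p q
    using ladd[of "p - q" q] by simp
  define A where "A = {polyfun Om q | q. L q = 0}"
  define M where "M = hclosure H ip A"
  have AH: "A \<subseteq> H" unfolding A_def by auto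
  have M: "csub M" unfolding M_def
  proof (rule csub_hclosure[OF AH])
    show "zf \<in> A" unfolding A_def using lsm[of 0 0] polyfun_0 by (intro CollectI exI[of _ 0]) simp
  next
    fix f g assume "f \<in> A" "g \<in> A"
    then obtain q r where "f = polyfun Om q" "L q = 0" "g = polyfun Om r" "L r = 0" unfolding A_def by blast
    then show "addf f g \<in> A" unfolding A_def using ladd polyfun_add by (intro CollectI exI[of _ "q + r"]) auto
  next
    fix f c assume "f \<in> A"
    then obtain q where "f = polyfun Om q" "L q = 0" unfolding A_def by blast
    then show "sclf c f \<in> A" unfolding A_def using lsm polyfun_smult by (intro CollectI exI[of _ "Polynomial.smult c q"]) auto
  qed
  have MH: "M \<subseteq> H" using csubD[OF M] by blast
  obtain v where vM: "v \<in> M" and vo: "\<forall>w\<in>M. ip (subf (polyfun Om p1) v) w = 0"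
    using projection_exists[OF M poly_H] by blast
  define u where "u = subf (polyfun Om p1) v"
  have vH: "v \<in> H" using vM MH by auto
  have uH: "u \<in> H" unfolding u_def using vH by auto
  have uo: "ip w u = 0" if "w \<in> M" for w
    using vo that ip_sym[OF uH, of w] MH unfolding u_def[symmetric] by auto
  have AM: "A \<subseteq> M" unfolding M_def by (rule hclosure_sub[OF AH])
  have key: "ip (polyfun Om p) u = L p * ip (polyfun Om p1) u" for p
  proof -
    define q where "q = p - Polynomial.smult (L p) p1"
    have "L q = 0" unfolding q_def ldiff lsm Lp1 by simp
    then have "polyfun Om q \<in> M" using AM unfolding A_def by blast
    then have 0: "ip (polyfun Om q) u = 0" by (rule uo)
    have "polyfun Om p = addf (polyfun Om q) (sclf (L p) (polyfun Om p1))"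
      unfolding q_def by (rule ext) (simp add: polyfun_def algebra_simps)
    then have "ip (polyfun Om p) u = ip (polyfun Om q) u + L p * ip (polyfun Om p1) u"
      using ip_add1[OF poly_H H_scl[OF poly_H] uH] ip_scl1[OF poly_H uH] by simp
    then show ?thesis using 0 by simp
  qed
  have p1u: "ip (polyfun Om p1) u = ip u u"
  proof -
    have "polyfun Om p1 = addf u v" unfolding u_def by auto
    then show ?thesis using ip_add1[OF uH vH uH] uo[OF vM] by simp
  qed
  have un: "u \<noteq> zf"
  proof
    assume u0: "u = zf"
    have pv: "polyfun Om p1 = v"
    proof (rule ext)
      fix z have "polyfun Om p1 z - v z = 0" using fun_cong[OF u0[unfolded u_def], of z] by simp
      then show "polyfun Om p1 z = v z" by simp
    qed
    then have "polyfun Om p1 \<in> M" using vM by simp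
    define C' where "C' = max C 0 + 1"
    have C': "C' > 0" unfolding C'_def by simp
    have iC: "1 / C' > 0" using C' by simp
    have "\<forall>e>0. \<exists>a\<in>A. nrm (subf (polyfun Om p1) a) < e" using \<open>polyfun Om p1 \<in> M\<close> unfolding M_def hclosure_def by blast
    then obtain a where a: "a \<in> A" "nrm (subf (polyfun Om p1) a) < 1 / C'" using iC by blast
    obtain q where q: "a = polyfun Om q" "L q = 0" using a unfolding A_def by blast
    have "1 = cmod (L (p1 - q))" using Lp1 q ldiff by simp
    also have "\<dots> \<le> C * nrm (polyfun Om (p1 - q))" by (rule bdd)
    also have "\<dots> \<le> C' * nrm (polyfun Om (p1 - q))"
      unfolding C'_def by (intro mult_right_mono) auto
    also have "\<dots> < C' * (1 / C')" using a q C' unfolding polyfun_diff by (intro mult_strict_left_mono) auto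
    also have "\<dots> = 1" using C' by simp
    finally show False by simp
  qed
  define r where "r = nrm u ^ 2"
  have rp: "r > 0" unfolding r_def using un uH nrm_zero_iff nrm_nonneg by (metis less_eq_real_def zero_less_power)
  define k where "k = sclf (of_real (1 / r)) u"
  show ?thesis
  proof (intro bexI[of _ k] allI)
    show "k \<in> H" unfolding k_def using uH by (rule H_scl)
    fix p
    have "ip (polyfun Om p) k = cnj (of_real (1 / r)) * ip (polyfun Om p) u"
      unfolding k_def by (rule ip_scl2[OF poly_H uH])
    also have "\<dots> = cnj (of_real (1 / r)) * (L p * ip u u)" using key p1u by simp
    also have "\<dots> = L p" using ip_self_real[OF uH] rp unfolding r_def by simp
    finally show "ip (polyfun Om p) k = L p" .
  qed
qed

lemma reproducible_lin:
  "(\<lambda>p. poly ((pderiv ^^ m) p) \<beta>) (p + q) = poly ((pderiv ^^ m) p) \<beta> + poly ((pderiv ^^ m) q) \<beta>"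
  "poly ((pderiv ^^ m) (Polynomial.smult c p)) \<beta> = c * poly ((pderiv ^^ m) p) \<beta>"
  by (simp_all add: funpow_pderiv_add funpow_pderiv_smult)

lemma kern_prop:
  assumes "reproducible_order Om ip \<beta> m"
  shows "kern Om H ip \<beta> m \<in> H" "\<And>p. ip (polyfun Om p) (kern Om H ip \<beta> m) = poly ((pderiv ^^ m) p) \<beta>"
proof -
  obtain C where C: "\<forall>p. cmod (poly ((pderiv ^^ m) p) \<beta>) \<le> C * nrm (polyfun Om p)"
    using assms unfolding reproducible_order_def by blast
  have "\<exists>k\<in>H. \<forall>p. ip (polyfun Om p) k = poly ((pderiv ^^ m) p) \<beta>"
  proof (rule riesz_poly[of "\<lambda>p. poly ((pderiv ^^ m) p) \<beta>" C])
    show "\<And>p q. poly ((pderiv ^^ m) (p + q)) \<beta> = poly ((pderiv ^^ m) p) \<beta> + poly ((pderiv ^^ m) q) \<beta>"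
      by (simp add: funpow_pderiv_add)
    show "\<And>c p. poly ((pderiv ^^ m) (Polynomial.smult c p)) \<beta> = c * poly ((pderiv ^^ m) p) \<beta>"
      by (simp add: funpow_pderiv_smult)
    show "\<And>p. cmod (poly ((pderiv ^^ m) p) \<beta>) \<le> C * nrm (polyfun Om p)" using C by blast
  qed
  then have "\<exists>k. k \<in> H \<and> (\<forall>p. ip (polyfun Om p) k = poly ((pderiv ^^ m) p) \<beta>)" by blast
  from someI_ex[OF this] show "kern Om H ip \<beta> m \<in> H" "\<And>p. ip (polyfun Om p) (kern Om H ip \<beta> m) = poly ((pderiv ^^ m) p) \<beta>"
    unfolding kern_def by blast+
qed

lemma deriv_at_poly:
  assumes "reproducible_order Om ip \<beta> m"
  shows "deriv_at Om H ip (polyfun Om p) \<beta> m = poly ((pderiv ^^ m) p) \<beta>"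
  unfolding deriv_at_def using kern_prop[OF assms] by simp

end


lemma funpow_pderiv_Suc_right: "(pderiv ^^ Suc j) q = (pderiv ^^ j) (pderiv q)"
  by (simp only: funpow_Suc_right o_apply)

lemma order_deriv_aux:
  fixes q :: "complex poly"
  shows "order \<beta> q = n \<Longrightarrow> q \<noteq> 0 \<Longrightarrow> (\<forall>j<n. poly ((pderiv ^^ j) q) \<beta> = 0) \<and> poly ((pderiv ^^ n) q) \<beta> \<noteq> 0"
proof (induction n arbitrary: q)
  case 0
  then show ?case using order_root[of q \<beta>] by auto
next
  case (Suc n)
  have r: "poly q \<beta> = 0" using Suc.prems order_root[of q \<beta>] by auto
  have pq: "pderiv q \<noteq> 0"
  proof
    assume "pderiv q = 0"
    then have "degree q = 0" using pderiv_eq_0_iff by blast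
    then obtain c where "q = [:c:]" by (meson degree_eq_zeroE)
    then show False using r Suc.prems by auto
  qed
  have o: "order \<beta> (pderiv q) = n" using order_pderiv[OF Suc.prems(2) r] Suc.prems(1) by simp
  have ih: "(\<forall>j<n. poly ((pderiv ^^ j) (pderiv q)) \<beta> = 0) \<and> poly ((pderiv ^^ n) (pderiv q)) \<beta> \<noteq> 0"
    using Suc.IH[OF o pq] .
  show ?case
  proof (intro conjI allI impI)
    fix j assume j: "j < Suc n"
    show "poly ((pderiv ^^ j) q) \<beta> = 0"
    proof (cases j)
      case 0 then show ?thesis using r by simp
    next
      case (Suc j') then show ?thesis using ih j by (simp add: funpow_swap1)
    qed
  next
    show "poly ((pderiv ^^ Suc n) q) \<beta> \<noteq> 0" using ih by (simp add: funpow_swap1)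
  qed
qed

lemma order_deriv_zero:
  fixes q :: "complex poly"
  shows "j < order \<beta> q \<Longrightarrow> poly ((pderiv ^^ j) q) \<beta> = 0"
proof (cases "q = 0")
  case True then show ?thesis by (simp add: funpow_pderiv_0)
next
  case False
  assume "j < order \<beta> q"
  then show ?thesis using order_deriv_aux[OF refl False] by blast
qed

lemma order_deriv_nonzero:
  fixes q :: "complex poly"
  shows "q \<noteq> 0 \<Longrightarrow> poly ((pderiv ^^ order \<beta> q) q) \<beta> \<noteq> 0"
  using order_deriv_aux[OF refl] by blast

lemma dvd_iff_derivs:
  fixes q :: "complex poly"
  shows "[:-\<beta>, 1:] ^ n dvd q \<longleftrightarrow> (\<forall>j<n. poly ((pderiv ^^ j) q) \<beta> = 0)"
proof (cases "q = 0")
  case True then show ?thesis by (simp add: funpow_pderiv_0)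
next
  case False
  show ?thesis
  proof
    assume "[:-\<beta>, 1:] ^ n dvd q"
    then have "n \<le> order \<beta> q" using order_divides False by blast
    then show "\<forall>j<n. poly ((pderiv ^^ j) q) \<beta> = 0" using order_deriv_zero by auto
  next
    assume a: "\<forall>j<n. poly ((pderiv ^^ j) q) \<beta> = 0"
    have "n \<le> order \<beta> q"
    proof (rule ccontr)
      assume "\<not> ?thesis"
      then have "order \<beta> q < n" by simp
      then show False using a order_deriv_nonzero[OF False] by blast
    qed
    then show "[:-\<beta>, 1:] ^ n dvd q" using order_divides by blast
  qed
qed

lemma order_ge_deriv_zero:
  fixes q :: "complex poly"
  shows "[:-\<beta>, 1:] ^ n dvd q \<Longrightarrow> j < n \<Longrightarrow> poly ((pderiv ^^ j) q) \<beta> = 0"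
  using dvd_iff_derivs by blast

lemma pderiv_linear: "pderiv [:-\<beta>, 1:] = (1 :: complex poly)"
  by (simp add: pderiv_pCons)

lemma pderiv_power_linear:
  "(pderiv ^^ m) ([:-\<beta>, 1:] ^ m) = [:fact m :: complex:]"
proof (induction m)
  case 0 then show ?case by simp
next
  case (Suc m)
  have "(pderiv ^^ Suc m) ([:-\<beta>, 1:] ^ Suc m) = (pderiv ^^ m) (pderiv ([:-\<beta>, 1:] ^ Suc m))"
    by (rule funpow_pderiv_Suc_right)
  also have "pderiv ([:-\<beta>, 1:] ^ Suc m) = Polynomial.smult (of_nat (Suc m)) ([:-\<beta>, 1:] ^ m)"
    using pderiv_power_Suc[of "[:-\<beta>, 1:]" m] pderiv_linear by simp
  finally show ?case using Suc.IH by (simp add: funpow_pderiv_smult)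
qed

lemma pderiv_funpow_degree:
  fixes p :: "complex poly"
  shows "degree p < j \<Longrightarrow> (pderiv ^^ j) p = 0"
proof (induction j arbitrary: p)
  case 0 then show ?case by simp
next
  case (Suc j)
  show ?case
  proof (cases "degree p = 0")
    case True
    then have "pderiv p = 0" using pderiv_eq_0_iff by blast
    then show ?thesis by (simp add: funpow_swap1 funpow_pderiv_0)
  next
    case False
    then have "degree (pderiv p) < j" using Suc.prems degree_pderiv[of p] by simp
    then show ?thesis using Suc.IH by (simp add: funpow_swap1)
  qed
qed

lemma pderiv_lin_mult:
  fixes X :: "complex poly"
  shows "pderiv ([:-\<beta>, 1:] * X) = [:-\<beta>, 1:] * pderiv X + X"
proof -
  have "pderiv ([:-\<beta>, 1:] * X) = [:-\<beta>, 1:] * pderiv X + X * pderiv [:-\<beta>, 1:]" by (rule pderiv_mult)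
  then show ?thesis unfolding pderiv_linear by simp
qed

lemma leibniz_linear:
  fixes p :: "complex poly"
  shows "(pderiv ^^ Suc n) ([:-\<beta>, 1:] * p) = [:-\<beta>, 1:] * (pderiv ^^ Suc n) p + Polynomial.smult (of_nat (Suc n)) ((pderiv ^^ n) p)"
proof (induction n)
  case 0
  show ?case using pderiv_lin_mult[of \<beta> p] by simp
next
  case (Suc n)
  define A where "A = (pderiv ^^ Suc n) p"
  define B where "B = (pderiv ^^ n) p"
  have AB: "pderiv B = A" unfolding A_def B_def by simp
  have A': "pderiv A = (pderiv ^^ Suc (Suc n)) p" unfolding A_def by simp
  have "(pderiv ^^ Suc (Suc n)) ([:-\<beta>, 1:] * p) = pderiv ((pderiv ^^ Suc n) ([:-\<beta>, 1:] * p))" by simp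
  also have "\<dots> = pderiv ([:-\<beta>, 1:] * A + Polynomial.smult (of_nat (Suc n)) B)"
    unfolding Suc.IH A_def B_def ..
  also have "\<dots> = [:-\<beta>, 1:] * pderiv A + A + Polynomial.smult (of_nat (Suc n)) A"
    by (simp only: pderiv_add pderiv_smult pderiv_lin_mult AB)
  also have "\<dots> = [:-\<beta>, 1:] * pderiv A + Polynomial.smult (of_nat (Suc (Suc n))) A"
  proof -
    have "Polynomial.smult (of_nat (Suc (Suc n))) A = Polynomial.smult (1 + of_nat (Suc n)) A"
      by (simp only: of_nat_Suc[of "Suc n"])
    also have "\<dots> = A + Polynomial.smult (of_nat (Suc n)) A" by (simp only: smult_add_left smult_1_left)
    finally show ?thesis by (simp only: add.assoc)
  qed
  also have "\<dots> = [:-\<beta>, 1:] * (pderiv ^^ Suc (Suc n)) p + Polynomial.smult (of_nat (Suc (Suc n))) ((pderiv ^^ Suc n) p)"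
  proof -
    have A'': "pderiv ((pderiv ^^ Suc n) p) = (pderiv ^^ Suc (Suc n)) p" by simp
    show ?thesis by (simp only: A_def A'')
  qed
  finally show ?case .
qed

lemma leibniz_linear_at:
  fixes p :: "complex poly"
  shows "poly ((pderiv ^^ Suc n) ([:-\<beta>, 1:] * p)) \<beta> = of_nat (Suc n) * poly ((pderiv ^^ n) p) \<beta>"
  unfolding leibniz_linear by simp



definition mulp :: "complex poly \<Rightarrow> cfun \<Rightarrow> cfun" where
  "mulp q f = (\<lambda>z. poly q z * f z)"

lemma mulp_polyfun: "mulp q (polyfun Om r) = polyfun Om (q * r)"
  unfolding mulp_def polyfun_def by auto

lemma mulp_sub: "mulp q (subf f g) = subf (mulp q f) (mulp q g)"
  unfolding mulp_def by (auto simp: algebra_simps)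

lemma mulp_mult: "mulp q (mulp r f) = mulp (q * r) f"
  unfolding mulp_def by auto

definition PM :: "complex set \<Rightarrow> complex poly \<Rightarrow> cfun set" where
  "PM Om p = {polyfun Om (r * p) | r. True}"

context hs begin

lemma mulp_pCons: "f \<in> H \<Longrightarrow> mulp (pCons a q) f = addf (sclf a f) (shift Om (mulp q f))"
proof (rule ext)
  fix z assume f: "f \<in> H"
  show "mulp (pCons a q) f z = a * f z + shift Om (mulp q f) z"
  proof (cases "z \<in> Om")
    case True then show ?thesis unfolding mulp_def shift_def by (simp add: algebra_simps)
  next
    case False then show ?thesis unfolding mulp_def shift_def using H_out[OF f False] by simp
  qed
qed

lemma mulp_H: "f \<in> H \<Longrightarrow> mulp q f \<in> H"
proof (induction q)
  case 0 then show ?case unfolding mulp_def by simp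
next
  case (pCons a q)
  show ?case unfolding mulp_pCons[OF pCons.prems] by (intro H_add H_scl shift_H pCons.IH pCons.prems)
qed

lemma mulp_bdd: "\<exists>C\<ge>0. \<forall>f\<in>H. nrm (mulp q f) \<le> C * nrm f"
proof (induction q)
  case 0 then show ?case unfolding mulp_def by (auto simp: hnorm_def)
next
  case (pCons a q)
  obtain C where C: "C \<ge> 0" "\<forall>f\<in>H. nrm (mulp q f) \<le> C * nrm f" using pCons.IH by blast
  obtain S where S: "\<forall>f\<in>H. nrm (shift Om f) \<le> S * nrm f" using shift_bdd by blast
  define S' where "S' = max S 0"
  have S': "\<forall>f\<in>H. nrm (shift Om f) \<le> S' * nrm f"
    using S unfolding S'_def by (meson max.cobounded1 mult_right_mono nrm_nonneg order_trans)
  show ?case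
  proof (intro exI[of _ "cmod a + S' * C"] conjI ballI)
    show "0 \<le> cmod a + S' * C" unfolding S'_def using C by simp
    fix f assume f: "f \<in> H"
    have mq: "mulp q f \<in> H" using mulp_H[OF f] .
    have "nrm (mulp (pCons a q) f) \<le> nrm (sclf a f) + nrm (shift Om (mulp q f))"
      unfolding mulp_pCons[OF f] by (rule nrm_add[OF H_scl[OF f] shift_H[OF mq]])
    also have "\<dots> \<le> cmod a * nrm f + S' * (C * nrm f)"
    proof -
      have "nrm (shift Om (mulp q f)) \<le> S' * nrm (mulp q f)" using S' mq by blast
      also have "\<dots> \<le> S' * (C * nrm f)" using C f unfolding S'_def by (intro mult_left_mono) auto
      finally show ?thesis using nrm_scl[OF f] by simp
    qed
    also have "\<dots> = (cmod a + S' * C) * nrm f" by (simp add: algebra_simps)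
    finally show "nrm (mulp (pCons a q) f) \<le> (cmod a + S' * C) * nrm f" .
  qed
qed

lemma PM_H: "PM Om p \<subseteq> H" unfolding PM_def by auto

lemma invsub_PM: "invsub H ip (polyfun Om p) = hclosure H ip (PM Om p)"
proof -
  have "{(\<lambda>z. \<Sum>k<n. c k * z ^ k * polyfun Om p z) | n c. True} = PM Om p"
  proof (intro equalityI subsetI)
    fix f assume "f \<in> {(\<lambda>z. \<Sum>k<n. c k * z ^ k * polyfun Om p z) | n c. True}"
    then obtain n c where f: "f = (\<lambda>z. \<Sum>k<n. c k * z ^ k * polyfun Om p z)" by blast
    define r where "r = (\<Sum>k<n. monom (c k) k)"
    have "f = polyfun Om (r * p)"
      unfolding f r_def polyfun_def by (auto simp: poly_sum poly_monom sum_distrib_right)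
    then show "f \<in> PM Om p" unfolding PM_def by blast
  next
    fix f assume "f \<in> PM Om p"
    then obtain r where f: "f = polyfun Om (r * p)" unfolding PM_def by blast
    have "f = (\<lambda>z. \<Sum>k<Suc (degree r). coeff r k * z ^ k * polyfun Om p z)"
      unfolding f
    proof (rule ext)
      fix z
      show "polyfun Om (r * p) z = (\<Sum>k<Suc (degree r). coeff r k * z ^ k * polyfun Om p z)"
      proof (cases "z \<in> Om")
        case True
        then have "polyfun Om (r * p) z = poly r z * poly p z" by (simp add: polyfun_def)
        also have "\<dots> = (\<Sum>k\<le>degree r. coeff r k * z ^ k) * poly p z" by (simp add: poly_altdef[of r])
        also have "\<dots> = (\<Sum>k<Suc (degree r). coeff r k * z ^ k * polyfun Om p z)"
          using True by (simp add: sum_distrib_right lessThan_Suc_atMost polyfun_def)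
        finally show ?thesis .
      next
        case False then show ?thesis by (simp add: polyfun_def)
      qed
    qed
    then show "f \<in> {(\<lambda>z. \<Sum>k<n. c k * z ^ k * polyfun Om p z) | n c. True}" by blast
  qed
  then show ?thesis unfolding invsub_def by simp
qed

lemma csub_invsub: "csub (invsub H ip (polyfun Om p))"
  unfolding invsub_PM
proof (rule csub_hclosure[OF PM_H])
  show "zf \<in> PM Om p" unfolding PM_def using polyfun_0[of Om] by (intro CollectI exI[of _ 0]) simp
next
  fix f g assume "f \<in> PM Om p" "g \<in> PM Om p"
  then obtain r s where "f = polyfun Om (r * p)" "g = polyfun Om (s * p)" unfolding PM_def by blast
  then have "addf f g = polyfun Om ((r + s) * p)" by (simp add: polyfun_add distrib_right)
  then show "addf f g \<in> PM Om p" unfolding PM_def by blast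
next
  fix f c assume "f \<in> PM Om p"
  then obtain r where "f = polyfun Om (r * p)" unfolding PM_def by blast
  then have "sclf c f = polyfun Om (Polynomial.smult c r * p)" by (simp add: polyfun_smult)
  then show "sclf c f \<in> PM Om p" unfolding PM_def by blast
qed

lemma invsub_H: "invsub H ip (polyfun Om p) \<subseteq> H"
  using csubD(1)[OF csub_invsub] .

lemma PM_invsub: "r * p = s \<Longrightarrow> polyfun Om s \<in> invsub H ip (polyfun Om p)"
  unfolding invsub_PM using hclosure_sub[OF PM_H] unfolding PM_def by blast

lemma invsub_mulp:
  assumes f: "f \<in> invsub H ip (polyfun Om s)"
  shows "mulp q f \<in> invsub H ip (polyfun Om (q * s))"
proof -
  obtain C where C: "C \<ge> 0" "\<forall>f\<in>H. nrm (mulp q f) \<le> C * nrm f" using mulp_bdd by blast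
  have fH: "f \<in> H" using f invsub_H by blast
  show ?thesis unfolding invsub_PM hclosure_def
  proof (intro CollectI conjI allI impI)
    show "mulp q f \<in> H" using mulp_H[OF fH] .
    fix e :: real assume e: "e > 0"
    have e': "e / (C + 1) > 0" using e C by simp
    obtain a where a: "a \<in> PM Om s" "nrm (subf f a) < e / (C + 1)"
      using f e' unfolding invsub_PM hclosure_def by blast
    obtain u where u: "a = polyfun Om (u * s)" using a unfolding PM_def by blast
    have aH: "a \<in> H" using u by simp
    have "nrm (subf (mulp q f) (mulp q a)) = nrm (mulp q (subf f a))" by (simp add: mulp_sub)
    also have "\<dots> \<le> C * nrm (subf f a)" using C H_sub[OF fH aH] by blast
    also have "\<dots> \<le> C * (e / (C + 1))" using a C by (intro mult_left_mono) auto
    also have "\<dots> < e" using e C by (simp add: field_simps)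
    finally have lt: "nrm (subf (mulp q f) (mulp q a)) < e" .
    have "mulp q a = polyfun Om (u * (q * s))" unfolding u mulp_polyfun by (simp add: algebra_simps)
    then have "mulp q a \<in> PM Om (q * s)" unfolding PM_def by blast
    then show "\<exists>b\<in>PM Om (q * s). nrm (subf (mulp q f) b) < e" using lt by blast
  qed
qed

lemma invsub_mult_sub: "invsub H ip (polyfun Om (q * s)) \<subseteq> invsub H ip (polyfun Om s)"
  unfolding invsub_PM[of "q * s"]
proof (rule hclosure_min[OF csub_invsub])
  show "PM Om (q * s) \<subseteq> invsub H ip (polyfun Om s)"
    unfolding PM_def using PM_invsub[of "_ * q" s] by (auto simp: mult.assoc)
qed

lemma invsub_mulp_same:
  assumes f: "f \<in> invsub H ip (polyfun Om s)"
  shows "mulp q f \<in> invsub H ip (polyfun Om s)"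
  using invsub_mulp[OF f] invsub_mult_sub by blast

lemma invsub_mono_mult:
  assumes "polyfun Om s1 \<in> invsub H ip (polyfun Om s2)"
  shows "invsub H ip (polyfun Om (q * s1)) \<subseteq> invsub H ip (polyfun Om (q * s2))"
  unfolding invsub_PM[of "q * s1"]
proof (rule hclosure_min[OF csub_invsub])
  have qs1: "polyfun Om (q * s1) \<in> invsub H ip (polyfun Om (q * s2))"
    using invsub_mulp[OF assms, of q] mulp_polyfun by simp
  show "PM Om (q * s1) \<subseteq> invsub H ip (polyfun Om (q * s2))"
  proof
    fix f assume "f \<in> PM Om (q * s1)"
    then obtain r where "f = polyfun Om (r * (q * s1))" unfolding PM_def by blast
    then have "f = mulp r (polyfun Om (q * s1))" by (simp add: mulp_polyfun)
    then show "f \<in> invsub H ip (polyfun Om (q * s2))" using invsub_mulp_same[OF qs1] by simp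
  qed
qed

lemma invsub_mem_sub:
  assumes "polyfun Om s1 \<in> invsub H ip (polyfun Om s2)"
  shows "invsub H ip (polyfun Om s1) \<subseteq> invsub H ip (polyfun Om s2)"
  using invsub_mono_mult[OF assms, of 1] by simp

lemma abs_bound: "\<forall>p. cmod (L p) \<le> C * N p \<Longrightarrow> (\<And>p. N p \<ge> 0) \<Longrightarrow> \<forall>p. cmod (L p) \<le> \<bar>C\<bar> * N p"
  by (meson abs_ge_self mult_right_mono order_trans)

lemma repr_down:
  assumes "reproducible_order Om ip \<beta> (Suc j)"
  shows "reproducible_order Om ip \<beta> j"
proof -
  obtain C1 where C1: "\<forall>p. cmod (poly ((pderiv ^^ Suc j) p) \<beta>) \<le> C1 * nrm (polyfun Om p)"
    using assms unfolding reproducible_order_def by blast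
  have C1': "\<forall>p. cmod (poly ((pderiv ^^ Suc j) p) \<beta>) \<le> \<bar>C1\<bar> * nrm (polyfun Om p)"
    by (rule abs_bound[OF C1]) simp
  obtain C where C: "C \<ge> 0" "\<forall>f\<in>H. nrm (mulp [:-\<beta>, 1:] f) \<le> C * nrm f" using mulp_bdd by blast
  show ?thesis unfolding reproducible_order_def
  proof (intro exI allI)
    fix p
    have "of_nat (Suc j) * poly ((pderiv ^^ j) p) \<beta> = poly ((pderiv ^^ Suc j) ([:-\<beta>, 1:] * p)) \<beta>"
      using leibniz_linear_at by simp
    then have "real (Suc j) * cmod (poly ((pderiv ^^ j) p) \<beta>) = cmod (poly ((pderiv ^^ Suc j) ([:-\<beta>, 1:] * p)) \<beta>)"
      by (metis norm_mult norm_of_nat)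
    also have "\<dots> \<le> \<bar>C1\<bar> * nrm (polyfun Om ([:-\<beta>, 1:] * p))" using C1' by blast
    also have "\<dots> \<le> \<bar>C1\<bar> * (C * nrm (polyfun Om p))"
    proof -
      have "nrm (mulp [:-\<beta>, 1:] (polyfun Om p)) \<le> C * nrm (polyfun Om p)" using C(2) by blast
      then have "nrm (polyfun Om ([:-\<beta>, 1:] * p)) \<le> C * nrm (polyfun Om p)" by (simp only: mulp_polyfun)
      then show ?thesis by (intro mult_left_mono) auto
    qed
    finally have "real (Suc j) * cmod (poly ((pderiv ^^ j) p) \<beta>) \<le> \<bar>C1\<bar> * C * nrm (polyfun Om p)" by simp
    moreover have "cmod (poly ((pderiv ^^ j) p) \<beta>) \<le> real (Suc j) * cmod (poly ((pderiv ^^ j) p) \<beta>)"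
      by (simp add: mult_le_cancel_right1)
    ultimately show "cmod (poly ((pderiv ^^ j) p) \<beta>) \<le> \<bar>C1\<bar> * C * nrm (polyfun Om p)" by linarith
  qed
qed

lemma repr_le: "reproducible_order Om ip \<beta> m \<Longrightarrow> j \<le> m \<Longrightarrow> reproducible_order Om ip \<beta> j"
proof (induction m)
  case 0 then show ?case by simp
next
  case (Suc m)
  then show ?case using repr_down by (cases "j = Suc m") auto
qed

end


definition pZ :: "complex multiset \<Rightarrow> complex poly" where
  "pZ Z = (\<Prod>\<beta>\<in>#Z. [:-\<beta>, 1:])"

lemma pZ_empty[simp]: "pZ {#} = 1" unfolding pZ_def by simp
lemma pZ_add[simp]: "pZ (add_mset \<gamma> Z) = [:-\<gamma>, 1:] * pZ Z" unfolding pZ_def by simp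

lemma pZ_nonzero: "pZ Z \<noteq> 0"
proof (induction Z)
  case empty show ?case by simp
next
  case (add x Z)
  have "[:-x, 1:] \<noteq> (0::complex poly)" by simp
  then show ?case unfolding pZ_add using add.IH by (rule no_zero_divisors)
qed

lemma order_linear: "order \<beta> [:-\<gamma>, 1:] = (if \<beta> = \<gamma> then 1 else (0::nat))"
proof (cases "\<beta> = \<gamma>")
  case True then show ?thesis using order_power_n_n[of \<gamma> 1] by simp
next
  case False then show ?thesis by (simp add: order_0I)
qed

lemma order_pZ: "order \<beta> (pZ Z) = count Z \<beta>"
proof (induction Z)
  case empty then show ?case by simp
next
  case (add \<gamma> Z)
  have "[:-\<gamma>, 1:] * pZ Z \<noteq> 0" using pZ_nonzero[of "add_mset \<gamma> Z"] unfolding pZ_add .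
  then have "order \<beta> ([:-\<gamma>, 1:] * pZ Z) = order \<beta> [:-\<gamma>, 1:] + order \<beta> (pZ Z)" by (rule order_mult)
  then show ?case using add.IH unfolding pZ_add order_linear by simp
qed

lemma pZ_dvd: "[:-\<beta>, 1:] ^ count Z \<beta> dvd pZ Z"
  using order_divides[of \<beta> "count Z \<beta>" "pZ Z"] order_pZ[of \<beta> Z] by simp

lemma small_zero: "c \<ge> 0 \<Longrightarrow> (\<And>e. e > 0 \<Longrightarrow> cmod x \<le> e * c) \<Longrightarrow> x = 0"
proof (rule ccontr)
  assume c: "c \<ge> 0" and h: "\<And>e. e > 0 \<Longrightarrow> cmod x \<le> e * c" and x: "x \<noteq> 0"
  define e where "e = cmod x / (2 * (c + 1))"
  have e: "e > 0" unfolding e_def using x c by (simp add: add_nonneg_pos)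
  have "cmod x \<le> e * c" using h[OF e] .
  also have "\<dots> \<le> e * (c + 1)" using e by simp
  also have "\<dots> = cmod x / 2" unfolding e_def using c by (simp add: field_simps)
  finally show False using x by simp
qed

context hs begin

definition okZ :: "complex multiset \<Rightarrow> bool" where
  "okZ Z \<longleftrightarrow> (\<forall>\<beta> j. \<beta> \<in># Z \<longrightarrow> j < count Z \<beta> \<longrightarrow> reproducible_order Om ip \<beta> j)"

definition Vz :: "complex multiset \<Rightarrow> cfun set" where
  "Vz Z = {f \<in> H. \<forall>\<beta> j. \<beta> \<in># Z \<longrightarrow> j < count Z \<beta> \<longrightarrow> deriv_at Om H ip f \<beta> j = 0}"

lemma okZ_add: "okZ (add_mset \<gamma> Z) \<Longrightarrow> okZ Z \<and> reproducible_order Om ip \<gamma> (count Z \<gamma>)"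
proof -
  assume a: "okZ (add_mset \<gamma> Z)"
  have 1: "okZ Z" unfolding okZ_def
  proof (intro allI impI)
    fix \<beta> j assume "\<beta> \<in># Z" "j < count Z \<beta>"
    moreover have "count Z \<beta> \<le> count (add_mset \<gamma> Z) \<beta>" by simp
    ultimately show "reproducible_order Om ip \<beta> j" using a unfolding okZ_def by force
  qed
  have "count Z \<gamma> < count (add_mset \<gamma> Z) \<gamma>" by simp
  then have 2: "reproducible_order Om ip \<gamma> (count Z \<gamma>)" using a unfolding okZ_def by force
  show ?thesis using 1 2 by blast
qed

lemma Vz_add: "Vz (add_mset \<gamma> Z) = Vz Z \<inter> {f. deriv_at Om H ip f \<gamma> (count Z \<gamma>) = 0}"
proof (intro equalityI subsetI)
  fix f assume f: "f \<in> Vz (add_mset \<gamma> Z)"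
  have 1: "f \<in> Vz Z" unfolding Vz_def
  proof (intro CollectI conjI allI impI)
    show "f \<in> H" using f unfolding Vz_def by blast
    fix \<beta> j assume "\<beta> \<in># Z" "j < count Z \<beta>"
    moreover have "count Z \<beta> \<le> count (add_mset \<gamma> Z) \<beta>" by simp
    ultimately show "deriv_at Om H ip f \<beta> j = 0" using f unfolding Vz_def by force
  qed
  have "count Z \<gamma> < count (add_mset \<gamma> Z) \<gamma>" by simp
  then have 2: "deriv_at Om H ip f \<gamma> (count Z \<gamma>) = 0" using f unfolding Vz_def by force
  show "f \<in> Vz Z \<inter> {f. deriv_at Om H ip f \<gamma> (count Z \<gamma>) = 0}" using 1 2 by blast
next
  fix f assume f: "f \<in> Vz Z \<inter> {f. deriv_at Om H ip f \<gamma> (count Z \<gamma>) = 0}"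
  show "f \<in> Vz (add_mset \<gamma> Z)" unfolding Vz_def
  proof (intro CollectI conjI allI impI)
    show "f \<in> H" using f unfolding Vz_def by blast
    fix \<beta> j assume b: "\<beta> \<in># add_mset \<gamma> Z" "j < count (add_mset \<gamma> Z) \<beta>"
    show "deriv_at Om H ip f \<beta> j = 0"
    proof (cases "\<beta> = \<gamma> \<and> j = count Z \<gamma>")
      case True then show ?thesis using f by simp
    next
      case False
      then have "j < count Z \<beta>" using b(2) by (auto split: if_splits)
      then have "\<beta> \<in># Z" by (simp add: count_inI)
      then show ?thesis using f \<open>j < count Z \<beta>\<close> unfolding Vz_def by blast
    qed
  qed
qed

lemma deriv_at_lin:
  assumes "reproducible_order Om ip \<beta> j" "f \<in> H" "g \<in> H"
  shows "deriv_at Om H ip (addf f g) \<beta> j = deriv_at Om H ip f \<beta> j + deriv_at Om H ip g \<beta> j"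
    "deriv_at Om H ip (sclf c f) \<beta> j = c * deriv_at Om H ip f \<beta> j"
    "deriv_at Om H ip (subf f g) \<beta> j = deriv_at Om H ip f \<beta> j - deriv_at Om H ip g \<beta> j"
  unfolding deriv_at_def using kern_prop(1)[OF assms(1)] assms
  by (simp_all add: ip_add1 ip_scl1 ip_sub1)

lemma deriv_at_cont:
  assumes "reproducible_order Om ip \<beta> j" "f \<in> H" "g \<in> H"
  shows "cmod (deriv_at Om H ip f \<beta> j - deriv_at Om H ip g \<beta> j) \<le> nrm (subf f g) * nrm (kern Om H ip \<beta> j)"
  unfolding deriv_at_def using ip_cont_bound[OF assms(2,3) kern_prop(1)[OF assms(1)]] .

lemma csub_Vz:
  assumes ok: "okZ Z"
  shows "csub (Vz Z)"
  unfolding csub_def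
proof (intro conjI ballI allI impI)
  show "Vz Z \<subseteq> H" unfolding Vz_def by auto
next
  show "zf \<in> Vz Z" unfolding Vz_def deriv_at_def using ok kern_prop(1) unfolding okZ_def by auto
next
  fix f g assume "f \<in> Vz Z" "g \<in> Vz Z"
  then show "addf f g \<in> Vz Z" unfolding Vz_def using ok deriv_at_lin(1) unfolding okZ_def by auto
next
  fix f c assume "f \<in> Vz Z"
  then show "sclf c f \<in> Vz Z" unfolding Vz_def using ok deriv_at_lin(2) unfolding okZ_def by auto
next
  fix f assume fH: "f \<in> H" and app: "\<forall>e>0. \<exists>g\<in>Vz Z. nrm (subf f g) < e"
  show "f \<in> Vz Z" unfolding Vz_def
  proof (intro CollectI conjI allI impI fH)
    fix \<beta> j assume b: "\<beta> \<in># Z" "j < count Z \<beta>"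
    have r: "reproducible_order Om ip \<beta> j" using ok b unfolding okZ_def by blast
    have kH: "kern Om H ip \<beta> j \<in> H" using kern_prop(1)[OF r] .
    show "deriv_at Om H ip f \<beta> j = 0"
    proof (rule small_zero)
      show "0 \<le> nrm (kern Om H ip \<beta> j)" using kH by simp
      fix e :: real assume e: "e > 0"
      obtain g where g: "g \<in> Vz Z" "nrm (subf f g) < e" using app e by blast
      have gH: "g \<in> H" and g0: "deriv_at Om H ip g \<beta> j = 0" using g b unfolding Vz_def by auto
      have "cmod (deriv_at Om H ip f \<beta> j - deriv_at Om H ip g \<beta> j) \<le> nrm (subf f g) * nrm (kern Om H ip \<beta> j)"
        by (rule deriv_at_cont[OF r fH gH])
      also have "\<dots> \<le> e * nrm (kern Om H ip \<beta> j)" using g kH by (intro mult_right_mono) auto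
      finally show "cmod (deriv_at Om H ip f \<beta> j) \<le> e * nrm (kern Om H ip \<beta> j)" using g0 by simp
    qed
  qed
qed

lemma invsub_one: "invsub H ip (polyfun Om 1) = H"
proof
  show "invsub H ip (polyfun Om 1) \<subseteq> H" by (rule invsub_H)
  show "H \<subseteq> invsub H ip (polyfun Om 1)" unfolding invsub_PM hclosure_def
  proof (intro subsetI CollectI conjI allI impI)
    fix f e assume f: "f \<in> H" and e: "(e::real) > 0"
    obtain p where "nrm (subf f (polyfun Om p)) < e" using poly_dense[OF f e] by blast
    moreover have "polyfun Om p \<in> PM Om 1" unfolding PM_def by (intro CollectI exI[of _ p]) simp
    ultimately show "\<exists>a\<in>PM Om 1. nrm (subf f a) < e" by blast
  qed
qed

lemma PM_in_Vz:
  assumes ok: "okZ Z"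
  shows "PM Om (pZ Z) \<subseteq> Vz Z"
proof
  fix f assume "f \<in> PM Om (pZ Z)"
  then obtain r where f: "f = polyfun Om (r * pZ Z)" unfolding PM_def by blast
  show "f \<in> Vz Z" unfolding Vz_def
  proof (intro CollectI conjI allI impI)
    show "f \<in> H" unfolding f by simp
    fix \<beta> j assume b: "\<beta> \<in># Z" "j < count Z \<beta>"
    have r: "reproducible_order Om ip \<beta> j" using ok b unfolding okZ_def by blast
    have "[:-\<beta>, 1:] ^ count Z \<beta> dvd pZ Z" by (rule pZ_dvd)
    then have "[:-\<beta>, 1:] ^ count Z \<beta> dvd r * pZ Z" by (rule dvd_mult)
    then have "poly ((pderiv ^^ j) (r * pZ Z)) \<beta> = 0" using b(2) by (rule order_ge_deriv_zero)
    then show "deriv_at Om H ip f \<beta> j = 0" unfolding f deriv_at_poly[OF r] .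
  qed
qed

theorem invsub_pZ:
  "okZ Z \<Longrightarrow> invsub H ip (polyfun Om (pZ Z)) = Vz Z"
proof (induction Z)
  case empty
  show ?case unfolding invsub_one pZ_empty Vz_def by auto
next
  case (add \<gamma> Z)
  define Z' where "Z' = add_mset \<gamma> Z"
  have ok': "okZ Z'" using add.prems unfolding Z'_def .
  have ok: "okZ Z" and rg: "reproducible_order Om ip \<gamma> (count Z \<gamma>)" using okZ_add[OF add.prems] by auto
  have IH: "invsub H ip (polyfun Om (pZ Z)) = Vz Z" using add.IH[OF ok] .
  show ?case unfolding Z'_def[symmetric]
  proof
    show "invsub H ip (polyfun Om (pZ Z')) \<subseteq> Vz Z'"
      unfolding invsub_PM by (rule hclosure_min[OF csub_Vz[OF ok'] PM_in_Vz[OF ok']])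
  next
    show "Vz Z' \<subseteq> invsub H ip (polyfun Om (pZ Z'))"
    proof
      fix f assume fV: "f \<in> Vz Z'"
      define P where "P = pZ Z"
      define m where "m = count Z \<gamma>"
      define L where "L = [:-\<gamma>, 1:]"
      define k where "k = kern Om H ip \<gamma> m"
      have pZ': "pZ Z' = L * P" unfolding Z'_def L_def P_def by simp
      have rg': "reproducible_order Om ip \<gamma> m" using rg unfolding m_def .
      have kH: "k \<in> H" unfolding k_def using kern_prop(1)[OF rg'] .
      have fH: "f \<in> H" using fV unfolding Vz_def by auto
      have fVz: "f \<in> Vz Z" and f0: "deriv_at Om H ip f \<gamma> m = 0"
        using fV unfolding Z'_def Vz_add m_def by auto
      have fP: "f \<in> hclosure H ip (PM Om P)" using fVz IH unfolding P_def invsub_PM by simp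
      have Pn: "P \<noteq> 0" unfolding P_def by (rule pZ_nonzero)
      define c0 where "c0 = poly ((pderiv ^^ m) P) \<gamma>"
      have c0: "c0 \<noteq> 0" unfolding c0_def m_def P_def using order_deriv_nonzero[OF pZ_nonzero, of \<gamma> Z] order_pZ by simp
      define K where "K = nrm k * nrm (polyfun Om P) / cmod c0"
      have K: "K \<ge> 0" unfolding K_def using kH by simp
      show "f \<in> invsub H ip (polyfun Om (pZ Z'))" unfolding invsub_PM hclosure_def pZ'
      proof (intro CollectI conjI allI impI fH)
        fix e :: real assume e: "e > 0"
        define \<delta> where "\<delta> = e / (1 + K)"
        have d: "\<delta> > 0" unfolding \<delta>_def using e K by simp
        obtain a where a: "a \<in> PM Om P" "nrm (subf f a) < \<delta>" using fP d unfolding hclosure_def by blast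
        obtain r where ar: "a = polyfun Om (r * P)" using a unfolding PM_def by blast
        have aH: "a \<in> H" using ar by simp
        define s where "s = synthetic_div r \<gamma>"
        define t where "t = poly r \<gamma>"
        have rs: "r = L * s + [:t:]" unfolding L_def s_def t_def using synthetic_div_correct'[of \<gamma> r] by simp
        have rP: "r * P = s * (L * P) + Polynomial.smult t P" unfolding rs by (simp add: algebra_simps)
        have dvdm: "[:-\<gamma>, 1:] ^ Suc m dvd s * (L * P)"
        proof -
          have "[:-\<gamma>, 1:] ^ m dvd P" unfolding m_def P_def by (rule pZ_dvd)
          then have "[:-\<gamma>, 1:] * [:-\<gamma>, 1:] ^ m dvd [:-\<gamma>, 1:] * P" by (rule mult_dvd_mono[OF dvd_refl])
          then have "[:-\<gamma>, 1:] ^ Suc m dvd L * P" unfolding L_def power_Suc .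
          then show ?thesis by (rule dvd_mult)
        qed
        have da: "deriv_at Om H ip a \<gamma> m = t * c0"
        proof -
          have "deriv_at Om H ip a \<gamma> m = poly ((pderiv ^^ m) (r * P)) \<gamma>" unfolding ar deriv_at_poly[OF rg'] ..
          also have "\<dots> = poly ((pderiv ^^ m) (s * (L * P))) \<gamma> + t * c0"
            unfolding rP c0_def by (simp add: funpow_pderiv_add funpow_pderiv_smult)
          also have "poly ((pderiv ^^ m) (s * (L * P))) \<gamma> = 0" using dvdm by (rule order_ge_deriv_zero) simp
          finally show ?thesis by simp
        qed
        have "cmod (deriv_at Om H ip a \<gamma> m - deriv_at Om H ip f \<gamma> m) \<le> nrm (subf a f) * nrm k"
          unfolding k_def by (rule deriv_at_cont[OF rg' aH fH])
        then have "cmod t * cmod c0 \<le> nrm (subf f a) * nrm k" using da f0 nrm_sub_sym[OF aH fH] by (simp add: norm_mult)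
        also have "\<dots> \<le> \<delta> * nrm k" using a kH by (intro mult_right_mono) auto
        finally have tb: "cmod t \<le> \<delta> * nrm k / cmod c0" using c0 by (simp add: field_simps)
        define b where "b = polyfun Om (s * (L * P))"
        have bPM: "b \<in> PM Om (L * P)" unfolding b_def PM_def by blast
        have bH: "b \<in> H" unfolding b_def by simp
        have ab: "subf f b = addf (subf f a) (sclf t (polyfun Om P))"
          unfolding ar b_def rP polyfun_add polyfun_smult by (rule ext) simp
        have "nrm (subf f b) \<le> nrm (subf f a) + nrm (sclf t (polyfun Om P))"
          unfolding ab by (rule nrm_add[OF H_sub[OF fH aH] H_scl[OF poly_H]])
        also have "nrm (sclf t (polyfun Om P)) = cmod t * nrm (polyfun Om P)" by (rule nrm_scl[OF poly_H])
        also have "cmod t * nrm (polyfun Om P) \<le> \<delta> * nrm k / cmod c0 * nrm (polyfun Om P)"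
          using tb by (intro mult_right_mono) auto
        also have "\<delta> * nrm k / cmod c0 * nrm (polyfun Om P) = \<delta> * K" unfolding K_def by simp
        finally have "nrm (subf f b) < \<delta> + \<delta> * K" using a by linarith
        also have "\<delta> + \<delta> * K = \<delta> * (1 + K)" by (simp add: algebra_simps)
        also have "\<dots> = e" unfolding \<delta>_def using K by simp
        finally show "\<exists>b\<in>PM Om (L * P). nrm (subf f b) < e" using bPM by blast
      qed
    qed
  qed
qed

end


lemma deriv_funpow_poly: "(deriv ^^ m) (poly p) = poly ((pderiv ^^ m) p)"
proof (induction m)
  case 0 then show ?case by simp
next
  case (Suc m)
  have "deriv (poly ((pderiv ^^ m) p)) = poly (pderiv ((pderiv ^^ m) p))"
    by (rule ext) (rule DERIV_imp_deriv[OF poly_DERIV])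
  then show ?case using Suc by simp
qed

context hs begin

definition hd :: "cfun \<Rightarrow> cfun \<Rightarrow> real" where
  "hd f g = (if f \<in> H \<and> g \<in> H then nrm (subf f g) else 0)"

lemma MS: "Metric_space H hd"
proof
  fix x y show "0 \<le> hd x y" unfolding hd_def using nrm_subf_poly by auto
next
  fix x y show "hd x y = hd y x" unfolding hd_def using nrm_sub_sym by auto
next
  fix x y assume x: "x \<in> H" and y: "y \<in> H"
  have "nrm (subf x y) = 0 \<longleftrightarrow> subf x y = zf" using nrm_zero_iff[OF H_sub[OF x y]] .
  also have "\<dots> \<longleftrightarrow> x = y"
  proof
    assume "subf x y = zf"
    then show "x = y" by (metis (no_types, lifting) ext eq_iff_diff_eq_0)
  qed simp
  finally show "hd x y = 0 \<longleftrightarrow> x = y" unfolding hd_def using x y by simp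
next
  fix x y z assume "x \<in> H" "y \<in> H" "z \<in> H"
  then show "hd x z \<le> hd x y + hd y z" unfolding hd_def using nrm_tri by simp
qed

lemma MS_complete: "Metric_space.mcomplete H hd"
proof -
  interpret MS: Metric_space H hd by (rule MS)
  show ?thesis unfolding MS.mcomplete_def
  proof (intro allI impI)
    fix \<sigma> assume c: "MS.MCauchy \<sigma>"
    have sH: "\<forall>n. \<sigma> n \<in> H" using c unfolding MS.MCauchy_def by auto
    have "\<forall>e>0. \<exists>N. \<forall>m\<ge>N. \<forall>n\<ge>N. nrm (subf (\<sigma> m) (\<sigma> n)) < e"
      using c sH unfolding MS.MCauchy_def hd_def by auto
    then obtain f where f: "f \<in> H" "(\<lambda>n. nrm (subf (\<sigma> n) f)) \<longlonglongrightarrow> 0" using complete sH by blast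
    have "limitin MS.mtopology \<sigma> f sequentially"
      unfolding MS.limitin_metric_dist_null
    proof (intro conjI f(1))
      show "\<forall>\<^sub>F x in sequentially. \<sigma> x \<in> H" using sH by simp
      have "(\<lambda>x. hd (\<sigma> x) f) = (\<lambda>n. nrm (subf (\<sigma> n) f))" unfolding hd_def using sH f(1) by auto
      then show "((\<lambda>x. hd (\<sigma> x) f) \<longlongrightarrow> 0) sequentially" using f(2) by simp
    qed
    then show "\<exists>x. limitin MS.mtopology \<sigma> x sequentially" by blast
  qed
qed

theorem zero_reproducible: "reproducible_order Om ip 0 m"
proof -
  interpret MS: Metric_space H hd by (rule MS)
  obtain r where r: "r > 0" "cball 0 r \<subseteq> Om" using Om_open zero_Om open_contains_cball by blast
  define E where "E = (\<lambda>n::nat. {f \<in> H. \<forall>w\<in>cball 0 r. cmod (f w) \<le> real n})"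
  have closedE: "closedin MS.mtopology (E n)" for n
    unfolding MS.closedin_metric
  proof (intro conjI allI impI)
    show "E n \<subseteq> H" unfolding E_def by auto
    fix f assume f: "f \<in> H - E n"
    then obtain w where w: "w \<in> cball 0 r" "cmod (f w) > real n" unfolding E_def by force
    obtain C where C: "\<forall>g\<in>H. cmod (g w) \<le> C * nrm g" using pointeval w r by blast
    define \<epsilon> where "\<epsilon> = (cmod (f w) - real n) / (\<bar>C\<bar> + 1)"
    have ep: "\<epsilon> > 0" unfolding \<epsilon>_def using w by simp
    show "\<exists>\<epsilon>>0. disjnt (E n) (MS.mball f \<epsilon>)"
    proof (intro exI[of _ \<epsilon>] conjI ep)
      show "disjnt (E n) (MS.mball f \<epsilon>)" unfolding disjnt_def
      proof (rule ccontr)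
        assume "E n \<inter> MS.mball f \<epsilon> \<noteq> {}"
        then obtain g where g: "g \<in> E n" "g \<in> H" "hd f g < \<epsilon>" by auto
        have fH: "f \<in> H" using f by auto
        have dd: "nrm (subf f g) < \<epsilon>" using g fH unfolding hd_def by auto
        have "cmod (f w - g w) \<le> C * nrm (subf f g)" using C H_sub[OF fH g(2)] by auto
        also have "\<dots> \<le> \<bar>C\<bar> * nrm (subf f g)" using nrm_subf_poly[OF fH g(2)] by (simp add: mult_right_mono)
        also have "\<dots> \<le> \<bar>C\<bar> * \<epsilon>" using dd by (simp add: mult_left_mono)
        also have "\<dots> < (\<bar>C\<bar> + 1) * \<epsilon>" using ep by simp
        also have "\<dots> = cmod (f w) - real n" unfolding \<epsilon>_def by simp
        finally have "cmod (f w - g w) < cmod (f w) - real n" .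
        moreover have "cmod (g w) \<le> real n" using g(1) w(1) unfolding E_def by auto
        moreover have "cmod (f w) \<le> cmod (f w - g w) + cmod (g w)" using norm_triangle_sub[of "f w" "g w"] by linarith
        ultimately show False by linarith
      qed
    qed
  qed
  have unionE: "\<Union> (range E) = H"
  proof (intro equalityI subsetI)
    fix f assume "f \<in> \<Union> (range E)" then show "f \<in> H" unfolding E_def by auto
  next
    fix f assume f: "f \<in> H"
    have "continuous_on (cball 0 r) f" using holomorphic_on_imp_continuous_on[OF H_holo[OF f]] r(2)
      by (rule continuous_on_subset)
    then have "compact (f ` cball 0 r)" by (intro compact_continuous_image) auto
    then obtain B where B: "\<forall>y\<in>f ` cball 0 r. norm y \<le> B" using compact_imp_bounded bounded_iff by metis
    obtain n :: nat where n: "B \<le> real n" using real_arch_simple by blast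
    have "f \<in> E n" unfolding E_def using f B n by force
    then show "f \<in> \<Union> (range E)" by blast
  qed
  have "\<exists>n. MS.mtopology interior_of (E n) \<noteq> {}"
  proof (rule ccontr)
    assume "\<not> ?thesis"
    then have "MS.mtopology interior_of \<Union> (range E) = {}"
      by (intro MS.metric_Baire_category_alt MS_complete) (auto simp: closedE)
    then show False unfolding unionE using MS.topspace_mtopology interior_of_topspace H_zero by (metis empty_iff)
  qed
  then obtain n x where x: "x \<in> MS.mtopology interior_of (E n)" by blast
  then obtain \<epsilon> where xH: "x \<in> H" and ep: "\<epsilon> > 0" and ball: "MS.mball x \<epsilon> \<subseteq> E n"
    unfolding MS.in_interior_of_mball by blast
  define K where "K = 4 * real n / \<epsilon>"
  have K: "K \<ge> 0" unfolding K_def using ep by simp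
  have unif: "cmod (g w) \<le> K * nrm g" if g: "g \<in> H" and w: "w \<in> cball 0 r" for g w
  proof (cases "g = zf")
    case True then show ?thesis using K by simp
  next
    case False
    have gp: "nrm g > 0" using False g nrm_zero_iff nrm_nonneg by (metis less_eq_real_def)
    define t where "t = \<epsilon> / (2 * nrm g)"
    have tp: "t > 0" unfolding t_def using ep gp by simp
    define h where "h = addf x (sclf (of_real t) g)"
    have hH: "h \<in> H" unfolding h_def using xH g by auto
    have "subf x h = sclf (- of_real t) g" unfolding h_def by auto
    then have "nrm (subf x h) = t * nrm g" using nrm_scl[OF g, of "- of_real t"] tp by simp
    also have "\<dots> = \<epsilon> / 2" unfolding t_def using gp by simp
    finally have "hd x h < \<epsilon>" unfolding hd_def using xH hH ep by simp
    then have "h \<in> E n" using ball xH hH by auto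
    then have hw: "cmod (h w) \<le> real n" using w unfolding E_def by auto
    have "x \<in> E n" using ball xH ep by (auto simp: hd_def hnorm_def)
    then have xw: "cmod (x w) \<le> real n" using w unfolding E_def by auto
    have "of_real t * g w = h w - x w" unfolding h_def by simp
    then have "t * cmod (g w) \<le> cmod (h w) + cmod (x w)" using tp
      by (metis abs_of_pos norm_mult norm_of_real norm_triangle_ineq4)
    also have "\<dots> \<le> 2 * real n" using hw xw by simp
    finally have "cmod (g w) \<le> 2 * real n / t" using tp by (simp add: field_simps)
    also have "2 * real n / t = K * nrm g" unfolding t_def K_def using gp ep by (simp add: field_simps)
    finally show ?thesis .
  qed
  show ?thesis unfolding reproducible_order_def
  proof (intro exI allI)
    fix p
    have "cmod ((deriv ^^ m) (poly p) 0) \<le> fact m * (K * nrm (polyfun Om p)) / r ^ m"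
    proof (rule Cauchy_inequality)
      show "poly p holomorphic_on ball 0 r" unfolding holomorphic_on_def field_differentiable_def by (meson poly_DERIV has_field_derivative_at_within)
      show "continuous_on (cball 0 r) (poly p)" by (intro continuous_intros)
      show "0 < r" using r by simp
      fix z :: complex assume z: "norm (0 - z) = r"
      then have zc: "z \<in> cball 0 r" by simp
      have "cmod (polyfun Om p z) \<le> K * nrm (polyfun Om p)" using unif[OF poly_H zc] .
      then show "cmod (poly p z) \<le> K * nrm (polyfun Om p)" using zc r(2) unfolding polyfun_def by auto
    qed
    then show "cmod (poly ((pderiv ^^ m) p) 0) \<le> fact m * K / r ^ m * nrm (polyfun Om p)"
      unfolding deriv_funpow_poly by simp
  qed
qed

lemma okZ_of_multiset: "reproducible_multiset Om ip Z \<Longrightarrow> okZ Z"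
  unfolding okZ_def reproducible_multiset_def
proof (intro allI impI)
  fix \<beta> j assume R: "\<forall>\<beta>. \<beta> \<in># Z \<longrightarrow> \<beta> \<noteq> 0 \<longrightarrow> reproducible_order Om ip \<beta> (count Z \<beta> - 1)"
    and b: "\<beta> \<in># Z" "j < count Z \<beta>"
  show "reproducible_order Om ip \<beta> j"
  proof (cases "\<beta> = 0")
    case True then show ?thesis using zero_reproducible by simp
  next
    case False
    then have "reproducible_order Om ip \<beta> (count Z \<beta> - 1)" using R b by blast
    then show ?thesis using repr_le b(2) by simp
  qed
qed

lemma multiset_of_okZ: "okZ Z \<Longrightarrow> reproducible_multiset Om ip Z"
  unfolding okZ_def reproducible_multiset_def by auto

end


lemma funpow_pderiv_sum: "(pderiv ^^ j) (\<Sum>i<(m::nat). F i) = (\<Sum>i<m. (pderiv ^^ j) (F i :: complex poly))"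
  by (induction m) (simp_all add: funpow_pderiv_add funpow_pderiv_0)

lemma deriv_linear_power_at:
  "poly ((pderiv ^^ j) ([:-\<beta>, 1:] ^ i)) \<beta> = (if i = j then fact j else (0::complex))"
proof (cases "j < i")
  case True
  have "poly ((pderiv ^^ j) ([:-\<beta>, 1:] ^ i)) \<beta> = (0::complex)" by (rule order_ge_deriv_zero[OF dvd_refl True])
  then show ?thesis using True by simp
next
  case False
  show ?thesis
  proof (cases "i = j")
    case True then show ?thesis using pderiv_power_linear[of j \<beta>] by simp
  next
    case False
    then have "degree ([:-\<beta>, 1:] ^ i :: complex poly) < j" using \<open>\<not> j < i\<close> by (simp add: degree_linear_power)
    then show ?thesis using False pderiv_funpow_degree by simp
  qed
qed

lemma taylor_low:
  fixes T :: "complex poly"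
  assumes "T = 0 \<or> degree T < m"
  shows "T = (\<Sum>i<m. Polynomial.smult (poly ((pderiv ^^ i) T) \<beta> / fact i) ([:-\<beta>, 1:] ^ i))"
proof -
  define S where "S = (\<Sum>i<m. Polynomial.smult (poly ((pderiv ^^ i) T) \<beta> / fact i) ([:-\<beta>, 1:] ^ i))"
  define D where "D = T - S"
  have dS: "poly ((pderiv ^^ j) S) \<beta> = poly ((pderiv ^^ j) T) \<beta>" if j: "j < m" for j
  proof -
    have "poly ((pderiv ^^ j) S) \<beta> = (\<Sum>i<m. poly ((pderiv ^^ i) T) \<beta> / fact i * poly ((pderiv ^^ j) ([:-\<beta>, 1:] ^ i)) \<beta>)"
      unfolding S_def funpow_pderiv_sum by (simp add: funpow_pderiv_smult poly_sum)
    also have "\<dots> = (\<Sum>i<m. if i = j then poly ((pderiv ^^ j) T) \<beta> else 0)"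
      by (rule sum.cong) (auto simp: deriv_linear_power_at)
    also have "\<dots> = poly ((pderiv ^^ j) T) \<beta>" using j by simp
    finally show ?thesis .
  qed
  have "\<forall>j<m. poly ((pderiv ^^ j) D) \<beta> = 0" unfolding D_def funpow_pderiv_diff using dS by simp
  then have dv: "[:-\<beta>, 1:] ^ m dvd D" using dvd_iff_derivs by blast
  show ?thesis
  proof (cases "m = 0")
    case True
    then have "T = 0" using assms by simp
    then show ?thesis using True by simp
  next
    case False
    have "degree S \<le> m - 1" unfolding S_def
    proof (rule degree_sum_le)
      fix i assume "i \<in> {..<m}"
      then have "i \<le> m - 1" by simp
      then show "degree (Polynomial.smult (poly ((pderiv ^^ i) T) \<beta> / fact i) ([:-\<beta>, 1:] ^ i)) \<le> m - 1"
        using degree_smult_le[of _ "[:-\<beta>, 1:] ^ i"] by (simp add: degree_linear_power)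
    qed (rule finite_lessThan)
    moreover have "degree T \<le> m - 1" using assms False by auto
    ultimately have "degree D \<le> m - 1" unfolding D_def by (rule degree_diff_le[rotated])
    have "D = 0"
    proof (rule ccontr)
      assume "D \<noteq> 0"
      then have "degree ([:-\<beta>, 1:] ^ m) \<le> degree D" using dv dvd_imp_degree_le by blast
      then show False using \<open>degree D \<le> m - 1\<close> False by (simp add: degree_linear_power)
    qed
    then show ?thesis unfolding D_def S_def by simp
  qed
qed

context hs begin

lemma nrm_polyfun_sum:
  "nrm (polyfun Om (\<Sum>i<(m::nat). Polynomial.smult (c i) (F i))) \<le> (\<Sum>i<m. cmod (c i) * nrm (polyfun Om (F i)))"
proof (induction m)
  case 0 then show ?case by (simp add: polyfun_0 hnorm_def)
next
  case (Suc m)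
  have "nrm (polyfun Om (\<Sum>i<Suc m. Polynomial.smult (c i) (F i)))
      = nrm (addf (polyfun Om (\<Sum>i<m. Polynomial.smult (c i) (F i))) (sclf (c m) (polyfun Om (F m))))"
    by (simp add: polyfun_add polyfun_smult)
  also have "\<dots> \<le> nrm (polyfun Om (\<Sum>i<m. Polynomial.smult (c i) (F i))) + nrm (sclf (c m) (polyfun Om (F m)))"
    by (rule nrm_add) auto
  also have "\<dots> \<le> (\<Sum>i<Suc m. cmod (c i) * nrm (polyfun Om (F i)))"
    using Suc nrm_scl[OF poly_H, of "c m" "F m"] by simp
  finally show ?case .
qed

theorem remove_zero:
  assumes ok: "okZ Z" and nr: "\<not> reproducible_order Om ip \<beta> (count Z \<beta>)"
  shows "invsub H ip (polyfun Om ([:-\<beta>, 1:] * pZ Z)) = invsub H ip (polyfun Om (pZ Z))"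
proof
  show "invsub H ip (polyfun Om ([:-\<beta>, 1:] * pZ Z)) \<subseteq> invsub H ip (polyfun Om (pZ Z))"
    by (rule invsub_mult_sub)
next
  define P where "P = pZ Z"
  define m where "m = count Z \<beta>"
  define L where "L = [:-\<beta>, 1:]"
  define N where "N = invsub H ip (polyfun Om (L * P))"
  have lower: "reproducible_order Om ip \<beta> i" if "i < m" for i
    using ok that unfolding okZ_def m_def by (metis count_inI not_less0)
  have "polyfun Om P \<in> N"
  proof (rule ccontr)
    assume notin: "polyfun Om P \<notin> N"
    then obtain \<epsilon> where ep: "\<epsilon> > 0" and far: "\<forall>a\<in>PM Om (L * P). \<not> nrm (subf (polyfun Om P) a) < \<epsilon>"
      unfolding N_def invsub_PM hclosure_def by auto
    have star: "cmod (poly r \<beta>) * \<epsilon> \<le> nrm (polyfun Om (r * P))" for r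
    proof -
      define s where "s = synthetic_div r \<beta>"
      define t where "t = poly r \<beta>"
      have rs: "r = L * s + [:t:]" unfolding L_def s_def t_def using synthetic_div_correct'[of \<beta> r] by simp
      show ?thesis
      proof (cases "t = 0")
        case True then show ?thesis unfolding t_def[symmetric] by simp
      next
        case False
        define a where "a = polyfun Om ((Polynomial.smult (- 1 / t) s) * (L * P))"
        have aPM: "a \<in> PM Om (L * P)" unfolding a_def PM_def by blast
        have "polyfun Om (r * P) = sclf t (subf (polyfun Om P) a)"
          unfolding a_def rs using False by (rule_tac ext) (simp add: polyfun_def algebra_simps)
        then have "nrm (polyfun Om (r * P)) = cmod t * nrm (subf (polyfun Om P) a)"
          using nrm_scl[OF H_sub[OF poly_H], of a t] aPM PM_H by auto
        moreover have "nrm (subf (polyfun Om P) a) \<ge> \<epsilon>" using far aPM by auto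
        ultimately show ?thesis unfolding t_def[symmetric] by (simp add: mult_left_mono)
      qed
    qed
    obtain T where PT: "P = L ^ m * T" unfolding P_def L_def m_def using pZ_dvd by (metis dvdE)
    obtain CT where CT: "CT \<ge> 0" "\<forall>f\<in>H. nrm (mulp T f) \<le> CT * nrm f" using mulp_bdd by blast
    have star2: "cmod (poly r \<beta>) \<le> (CT / \<epsilon>) * nrm (polyfun Om (L ^ m * r))" for r
    proof -
      have "cmod (poly r \<beta>) * \<epsilon> \<le> nrm (polyfun Om (r * P))" by (rule star)
      also have "polyfun Om (r * P) = mulp T (polyfun Om (L ^ m * r))" unfolding PT mulp_polyfun by (simp add: algebra_simps)
      also have "nrm \<dots> \<le> CT * nrm (polyfun Om (L ^ m * r))" using CT by blast
      finally show ?thesis using ep by (simp add: field_simps)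
    qed
    have "\<forall>i\<in>{..<m}. \<exists>C. \<forall>p. cmod (poly ((pderiv ^^ i) p) \<beta>) \<le> C * nrm (polyfun Om p)"
      using lower unfolding reproducible_order_def by blast
    then obtain Cf where Cf: "\<forall>i\<in>{..<m}. \<forall>p. cmod (poly ((pderiv ^^ i) p) \<beta>) \<le> Cf i * nrm (polyfun Om p)"
      by (metis bchoice)
    define K2 where "K2 = (\<Sum>i<m. \<bar>Cf i\<bar> / fact i * nrm (polyfun Om (L ^ i)))"
    have K2: "K2 \<ge> 0" unfolding K2_def by (intro sum_nonneg) auto
    have "reproducible_order Om ip \<beta> m" unfolding reproducible_order_def
    proof (intro exI allI)
      fix q
      define r where "r = q div L ^ m"
      define T' where "T' = q mod L ^ m"
      have qd: "q = L ^ m * r + T'" unfolding r_def T'_def by (simp add: mult.commute)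
      have Lm0: "L ^ m \<noteq> 0" unfolding L_def by simp
      have T'deg: "T' = 0 \<or> degree T' < m"
        using degree_mod_less[OF Lm0, of q] unfolding T'_def L_def by (simp add: degree_linear_power)
      have T'm: "(pderiv ^^ m) T' = 0"
        using T'deg pderiv_funpow_degree funpow_pderiv_0 by auto
      define s where "s = synthetic_div r \<beta>"
      have rs: "r = L * s + [:poly r \<beta>:]" unfolding L_def s_def using synthetic_div_correct'[of \<beta> r] by simp
      have Lmr: "L ^ m * r = L ^ Suc m * s + Polynomial.smult (poly r \<beta>) (L ^ m)"
        by (subst rs) (simp add: algebra_simps)
      have dz: "poly ((pderiv ^^ m) (L ^ Suc m * s)) \<beta> = 0"
        unfolding L_def by (rule order_ge_deriv_zero[of _ "Suc m"]) simp_all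
      have qm: "poly ((pderiv ^^ m) q) \<beta> = fact m * poly r \<beta>"
        unfolding qd Lmr funpow_pderiv_add funpow_pderiv_smult T'm using dz
        by (simp add: L_def pderiv_power_linear)
      have T'low: "poly ((pderiv ^^ i) T') \<beta> = poly ((pderiv ^^ i) q) \<beta>" if "i < m" for i
      proof -
        have "[:-\<beta>, 1:] ^ m dvd L ^ m * r" unfolding L_def by simp
        then have "poly ((pderiv ^^ i) (L ^ m * r)) \<beta> = 0" using that by (rule order_ge_deriv_zero)
        then show ?thesis unfolding qd funpow_pderiv_add by simp
      qed
      have T'b: "nrm (polyfun Om T') \<le> K2 * nrm (polyfun Om q)"
      proof -
        have "T' = (\<Sum>i<m. Polynomial.smult (poly ((pderiv ^^ i) T') \<beta> / fact i) (L ^ i))"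
          unfolding L_def by (rule taylor_low[OF T'deg])
        then have "nrm (polyfun Om T') \<le> (\<Sum>i<m. cmod (poly ((pderiv ^^ i) T') \<beta> / fact i) * nrm (polyfun Om (L ^ i)))"
          using nrm_polyfun_sum[where c="\<lambda>i. poly ((pderiv ^^ i) T') \<beta> / fact i" and m=m and F="\<lambda>i. L ^ i"] by simp
        also have "\<dots> \<le> (\<Sum>i<m. \<bar>Cf i\<bar> / fact i * nrm (polyfun Om (L ^ i)) * nrm (polyfun Om q))"
        proof (rule sum_mono)
          fix i assume i: "i \<in> {..<m}"
          have "cmod (poly ((pderiv ^^ i) T') \<beta>) \<le> \<bar>Cf i\<bar> * nrm (polyfun Om q)"
            using Cf i T'low[of i] by (metis abs_ge_self lessThan_iff mult_right_mono nrm_nonneg poly_H order_trans)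
          then have "cmod (poly ((pderiv ^^ i) T') \<beta> / fact i) \<le> \<bar>Cf i\<bar> / fact i * nrm (polyfun Om q)"
            by (simp add: norm_divide divide_right_mono)
          then have "cmod (poly ((pderiv ^^ i) T') \<beta> / fact i) * nrm (polyfun Om (L ^ i))
              \<le> (\<bar>Cf i\<bar> / fact i * nrm (polyfun Om q)) * nrm (polyfun Om (L ^ i))"
            by (rule mult_right_mono) simp
          then show "cmod (poly ((pderiv ^^ i) T') \<beta> / fact i) * nrm (polyfun Om (L ^ i))
              \<le> \<bar>Cf i\<bar> / fact i * nrm (polyfun Om (L ^ i)) * nrm (polyfun Om q)"
            by (simp add: mult_ac)
        qed
        also have "\<dots> = K2 * nrm (polyfun Om q)" unfolding K2_def by (simp add: sum_distrib_right)
        finally show ?thesis .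
      qed
      have "nrm (polyfun Om (L ^ m * r)) \<le> nrm (polyfun Om q) + nrm (polyfun Om T')"
      proof -
        have "polyfun Om (L ^ m * r) = subf (polyfun Om q) (polyfun Om T')" unfolding qd polyfun_add by auto
        then show ?thesis using nrm_sub_le[OF poly_H poly_H] by simp
      qed
      then have Lb: "nrm (polyfun Om (L ^ m * r)) \<le> (1 + K2) * nrm (polyfun Om q)" using T'b by (simp add: algebra_simps)
      have "cmod (poly ((pderiv ^^ m) q) \<beta>) = fact m * cmod (poly r \<beta>)" unfolding qm by (simp add: norm_mult)
      also have "\<dots> \<le> fact m * ((CT / \<epsilon>) * nrm (polyfun Om (L ^ m * r)))"
        using star2[of r] by (intro mult_left_mono) auto
      also have "\<dots> \<le> fact m * ((CT / \<epsilon>) * ((1 + K2) * nrm (polyfun Om q)))"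
        using Lb CT ep by (intro mult_left_mono) auto
      also have "\<dots> = fact m * (CT / \<epsilon>) * (1 + K2) * nrm (polyfun Om q)" by simp
      finally show "cmod (poly ((pderiv ^^ m) q) \<beta>) \<le> fact m * (CT / \<epsilon>) * (1 + K2) * nrm (polyfun Om q)" .
    qed
    then show False using nr unfolding m_def by simp
  qed
  then show "invsub H ip (polyfun Om (pZ Z)) \<subseteq> invsub H ip (polyfun Om ([:-\<beta>, 1:] * pZ Z))"
    unfolding N_def P_def L_def by (rule invsub_mem_sub)
qed

theorem exists_Z:
  fixes p :: "complex poly"
  shows "p \<noteq> 0 \<Longrightarrow> \<exists>Z. okZ Z \<and> count Z 0 = order 0 p \<and> invsub H ip (polyfun Om p) = invsub H ip (polyfun Om (pZ Z))"
proof (induction "degree p" arbitrary: p rule: less_induct)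
  case less
  show ?case
  proof (cases "degree p = 0")
    case True
    then obtain c where pc: "p = [:c:]" by (meson degree_eq_zeroE)
    then have c: "c \<noteq> 0" using less.prems by simp
    have o: "order 0 p = 0" using c pc by (intro order_0I) simp
    have "invsub H ip (polyfun Om p) = invsub H ip (polyfun Om 1)"
    proof
      show "invsub H ip (polyfun Om p) \<subseteq> invsub H ip (polyfun Om 1)"
        using invsub_mult_sub[of p 1] by simp
      have "polyfun Om 1 \<in> invsub H ip (polyfun Om p)" using c pc by (intro PM_invsub[of "[:1/c:]"]) simp
      then show "invsub H ip (polyfun Om 1) \<subseteq> invsub H ip (polyfun Om p)" by (rule invsub_mem_sub)
    qed
    then show ?thesis using o by (intro exI[of _ "{#}"]) (auto simp: okZ_def)
  next
    case False
    then have "\<not> constant (poly p)" by (simp add: constant_degree)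
    then obtain \<beta> where "poly p \<beta> = 0" using fundamental_theorem_of_algebra by blast
    then obtain s where ps: "p = [:-\<beta>, 1:] * s" using poly_eq_0_iff_dvd by (metis dvdE)
    have s0: "s \<noteq> 0" using ps less.prems by auto
    have "degree ([:-\<beta>, 1:] * s) = degree [:-\<beta>, 1:] + degree s" using s0 by (intro degree_mult_eq) simp_all
    moreover have "degree [:-\<beta>, 1:] = (1::nat)" by simp
    ultimately have ds: "degree s < degree p" unfolding ps by linarith
    obtain Zs where Zs: "okZ Zs" "count Zs 0 = order 0 s" "invsub H ip (polyfun Om s) = invsub H ip (polyfun Om (pZ Zs))"
      using less.hyps[OF ds s0] by blast
    have eq1: "invsub H ip (polyfun Om p) = invsub H ip (polyfun Om ([:-\<beta>, 1:] * pZ Zs))"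
    proof
      have "polyfun Om s \<in> invsub H ip (polyfun Om (pZ Zs))" using Zs(3) PM_invsub[of 1 s s] by simp
      then show "invsub H ip (polyfun Om p) \<subseteq> invsub H ip (polyfun Om ([:-\<beta>, 1:] * pZ Zs))"
        unfolding ps by (rule invsub_mono_mult)
      have "polyfun Om (pZ Zs) \<in> invsub H ip (polyfun Om s)" using Zs(3) PM_invsub[of 1 "pZ Zs" "pZ Zs"] by simp
      then show "invsub H ip (polyfun Om ([:-\<beta>, 1:] * pZ Zs)) \<subseteq> invsub H ip (polyfun Om p)"
        unfolding ps by (rule invsub_mono_mult)
    qed
    have op: "order 0 p = order 0 [:-\<beta>, 1:] + order 0 s" unfolding ps using less.prems ps by (intro order_mult) simp
    show ?thesis
    proof (cases "reproducible_order Om ip \<beta> (count Zs \<beta>)")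
      case True
      define Z where "Z = add_mset \<beta> Zs"
      have okz: "okZ Z" unfolding okZ_def Z_def
      proof (intro allI impI)
        fix \<gamma> j assume "\<gamma> \<in># add_mset \<beta> Zs" "j < count (add_mset \<beta> Zs) \<gamma>"
        then show "reproducible_order Om ip \<gamma> j"
          using Zs(1) True unfolding okZ_def
          by (cases "\<gamma> = \<beta>") (auto simp: less_Suc_eq count_inI split: if_splits)
      qed
      have "count Z 0 = order 0 p" unfolding Z_def op order_linear Zs(2)[symmetric] by auto
      moreover have "pZ Z = [:-\<beta>, 1:] * pZ Zs" unfolding Z_def by simp
      ultimately show ?thesis using okz eq1 by metis
    next
      case False
      then have b0: "\<beta> \<noteq> 0" using zero_reproducible by blast
      have "count Zs 0 = order 0 p" unfolding op order_linear Zs(2) using b0 by simp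
      moreover have "invsub H ip (polyfun Om p) = invsub H ip (polyfun Om (pZ Zs))"
        unfolding eq1 by (rule remove_zero[OF Zs(1) False])
      ultimately show ?thesis using Zs(1) by blast
    qed
  qed
qed

end


context hs begin

definition wfun :: "cfun \<Rightarrow> cfun list \<Rightarrow> nat \<Rightarrow> cfun" where
  "wfun u vs = (\<lambda>i. if i = 0 then u else vs ! (i - 1))"

definition Mmin :: "cfun \<Rightarrow> cfun list \<Rightarrow> nat \<Rightarrow> complex mat" where
  "Mmin u vs i = mat (length vs) (length vs) (\<lambda>(r, c). ip (wfun u vs (if r < i then r else Suc r)) (vs ! c))"

definition gram :: "cfun list \<Rightarrow> complex mat" where
  "gram vs = mat (length vs) (length vs) (\<lambda>(r, c). ip (vs ! r) (vs ! c))"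

lemma Dfun_eq: "Dfun ip u vs = (\<lambda>z. \<Sum>i\<le>length vs. ((-1) ^ i * det (Mmin u vs i)) * wfun u vs i z)"
  unfolding Dfun_def Mmin_def wfun_def Let_def by simp

lemma Mmin_0: "Mmin u vs 0 = gram vs"
  unfolding Mmin_def gram_def wfun_def by (rule eq_matI) auto

lemma wfun_H: "u \<in> H \<Longrightarrow> set vs \<subseteq> H \<Longrightarrow> i \<le> length vs \<Longrightarrow> wfun u vs i \<in> H"
  unfolding wfun_def by (auto simp: nth_mem subset_iff)

lemma Dfun_H_ip:
  assumes u: "u \<in> H" and vs: "set vs \<subseteq> H" and g: "g \<in> H"
  shows "Dfun ip u vs \<in> H \<and> ip (Dfun ip u vs) g = (\<Sum>i\<le>length vs. ((-1) ^ i * det (Mmin u vs i)) * ip (wfun u vs i) g)"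
  unfolding Dfun_eq by (rule ip_sum1) (auto intro: wfun_H[OF u vs] g)

lemma Dfun_orth:
  assumes u: "u \<in> H" and vs: "set vs \<subseteq> H" and c: "c < length vs"
  shows "ip (Dfun ip u vs) (vs ! c) = 0"
proof -
  define N where "N = length vs"
  define v where "v = vs ! c"
  have vH: "v \<in> H" unfolding v_def using vs c by (auto simp: nth_mem subset_iff)
  define A where "A = mat (Suc N) (Suc N) (\<lambda>(i, j). if j = 0 then ip (wfun u vs i) v else ip (wfun u vs i) (vs ! (j - 1)))"
  have A: "A \<in> carrier_mat (Suc N) (Suc N)" unfolding A_def by simp
  have del: "mat_delete A i 0 = Mmin u vs i" if i: "i < Suc N" for i
  proof (rule eq_matI)
    fix r c' assume r: "r < dim_row (Mmin u vs i)" and c': "c' < dim_col (Mmin u vs i)"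
    then have rN: "r < N" "c' < N" unfolding Mmin_def N_def by auto
    have dA: "dim_row A = Suc N" "dim_col A = Suc N" using A by auto
    have "mat_delete A i 0 $$ (r, c') = A $$ (if r < i then r else Suc r, Suc c')"
      unfolding mat_delete_def dA using rN by simp
    also have "\<dots> = ip (wfun u vs (if r < i then r else Suc r)) (vs ! c')" unfolding A_def using rN by auto
    also have "\<dots> = Mmin u vs i $$ (r, c')" unfolding Mmin_def using rN unfolding N_def by simp
    finally show "mat_delete A i 0 $$ (r, c') = Mmin u vs i $$ (r, c')" .
  next
    show "dim_row (mat_delete A i 0) = dim_row (Mmin u vs i)" using A unfolding Mmin_def N_def by simp
    show "dim_col (mat_delete A i 0) = dim_col (Mmin u vs i)" using A unfolding Mmin_def N_def by simp
  qed
  have "det A = (\<Sum>i<Suc N. A $$ (i, 0) * cofactor A i 0)"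
    by (rule laplace_expansion_column[OF A]) simp
  also have "\<dots> = (\<Sum>i<Suc N. ((-1) ^ i * det (Mmin u vs i)) * ip (wfun u vs i) v)"
  proof (rule sum.cong)
    fix i assume "i \<in> {..<Suc N}"
    then have i: "i < Suc N" by simp
    have 1: "A $$ (i, 0) = ip (wfun u vs i) v" unfolding A_def using i by simp
    have 2: "cofactor A i 0 = (-1) ^ i * det (Mmin u vs i)" unfolding cofactor_def del[OF i] by simp
    show "A $$ (i, 0) * cofactor A i 0 = ((-1) ^ i * det (Mmin u vs i)) * ip (wfun u vs i) v"
      unfolding 1 2 by (simp add: mult.commute)
  qed simp
  also have "\<dots> = ip (Dfun ip u vs) v"
    using Dfun_H_ip[OF u vs vH] unfolding N_def by (simp add: lessThan_Suc_atMost)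
  finally have eq: "det A = ip (Dfun ip u vs) v" .
  have "col A 0 = col A (Suc c)"
    using c by (intro eq_vecI) (auto simp: A_def v_def col_def N_def)
  then have "det A = 0" using det_identical_columns[OF A, of 0 "Suc c"] c unfolding N_def by simp
  then show ?thesis using eq unfolding v_def by simp
qed

lemma Dfun_ip_perp:
  assumes u: "u \<in> H" and vs: "set vs \<subseteq> H" and f: "f \<in> H"
    and perp: "\<And>c. c < length vs \<Longrightarrow> ip (vs ! c) f = 0"
  shows "ip (Dfun ip u vs) f = det (gram vs) * ip u f"
proof -
  have "ip (Dfun ip u vs) f = (\<Sum>i\<le>length vs. ((-1) ^ i * det (Mmin u vs i)) * ip (wfun u vs i) f)"
    using Dfun_H_ip[OF u vs f] by simp
  also have "\<dots> = (\<Sum>i\<le>length vs. if i = 0 then det (gram vs) * ip u f else 0)"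
  proof (rule sum.cong)
    fix i assume "i \<in> {..length vs}"
    then show "((-1) ^ i * det (Mmin u vs i)) * ip (wfun u vs i) f = (if i = 0 then det (gram vs) * ip u f else 0)"
      using perp[of "i - 1"] by (cases i) (auto simp: wfun_def Mmin_0)
  qed simp
  also have "\<dots> = det (gram vs) * ip u f" by simp
  finally show ?thesis .
qed

theorem Dfun_proj:
  assumes u: "u \<in> H" and vs: "set vs \<subseteq> H" and G: "det (gram vs) \<noteq> 0"
    and V: "csub V" and Veq: "V = {f \<in> H. \<forall>c<length vs. ip f (vs ! c) = 0}"
  shows "proj ip V u = sclf (1 / det (gram vs)) (Dfun ip u vs)"
proof (rule proj_unique[OF V u])
  define D where "D = Dfun ip u vs"
  have DH: "D \<in> H" unfolding D_def using Dfun_H_ip[OF u vs H_zero] by blast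
  show "sclf (1 / det (gram vs)) (Dfun ip u vs) \<in> V" unfolding Veq
  proof (intro CollectI conjI allI impI)
    show "sclf (1 / det (gram vs)) (Dfun ip u vs) \<in> H" by (rule H_scl[OF DH[unfolded D_def]])
    fix c assume c: "c < length vs"
    have vc: "vs ! c \<in> H" using vs c by (auto simp: nth_mem subset_iff)
    have "ip (sclf (1 / det (gram vs)) (Dfun ip u vs)) (vs ! c) = (1 / det (gram vs)) * ip (Dfun ip u vs) (vs ! c)"
      by (rule ip_scl1[OF DH[unfolded D_def] vc])
    also have "\<dots> = 0" using Dfun_orth[OF u vs c] by simp
    finally show "ip (sclf (1 / det (gram vs)) (Dfun ip u vs)) (vs ! c) = 0" .
  qed
  show "\<forall>w\<in>V. ip (subf u (sclf (1 / det (gram vs)) (Dfun ip u vs))) w = 0"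
  proof
    fix w assume w: "w \<in> V"
    have wH: "w \<in> H" using w Veq by auto
    have perp: "ip (vs ! c) w = 0" if "c < length vs" for c
    proof -
      have vc: "vs ! c \<in> H" using vs that by (auto simp: nth_mem subset_iff)
      have "ip w (vs ! c) = 0" using w Veq that by auto
      then show ?thesis using ip_sym[OF wH vc] by simp
    qed
    have "ip (subf u (sclf (1 / det (gram vs)) D)) w = ip u w - ip (sclf (1 / det (gram vs)) D) w"
      by (rule ip_sub1[OF u H_scl[OF DH] wH])
    also have "ip (sclf (1 / det (gram vs)) D) w = (1 / det (gram vs)) * ip D w" by (rule ip_scl1[OF DH wH])
    also have "ip D w = det (gram vs) * ip u w" unfolding D_def by (rule Dfun_ip_perp[OF u vs wH perp])
    finally show "ip (subf u (sclf (1 / det (gram vs)) (Dfun ip u vs))) w = 0" using G unfolding D_def by simp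
  qed
qed

end


context hs begin

lemma ip_sum2:
  assumes "finite I" "\<And>i. i \<in> I \<Longrightarrow> F i \<in> H" "g \<in> H"
  shows "ip g (\<lambda>z. \<Sum>i\<in>I. a i * F i z) = (\<Sum>i\<in>I. cnj (a i) * ip g (F i))"
proof -
  have s: "(\<lambda>z. \<Sum>i\<in>I. a i * F i z) \<in> H" and e: "ip (\<lambda>z. \<Sum>i\<in>I. a i * F i z) g = (\<Sum>i\<in>I. a i * ip (F i) g)"
    using ip_sum1[OF assms] by auto
  have "ip g (\<lambda>z. \<Sum>i\<in>I. a i * F i z) = cnj (ip (\<lambda>z. \<Sum>i\<in>I. a i * F i z) g)" by (rule ip_sym[OF s assms(3)])
  also have "\<dots> = (\<Sum>i\<in>I. cnj (a i) * cnj (ip (F i) g))" unfolding e by simp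
  also have "\<dots> = (\<Sum>i\<in>I. cnj (a i) * ip g (F i))"
  proof (rule sum.cong)
    fix i assume i: "i \<in> I"
    show "cnj (a i) * cnj (ip (F i) g) = cnj (a i) * ip g (F i)" using ip_sym[OF assms(2)[OF i] assms(3)] by simp
  qed simp
  finally show ?thesis .
qed

definition pairs :: "complex multiset \<Rightarrow> (complex \<times> nat) set" where
  "pairs Z = {(\<beta>, j). \<beta> \<in># Z \<and> j < count Z \<beta>}"

lemma finite_pairs: "finite (pairs Z)"
proof -
  have "pairs Z \<subseteq> set_mset Z \<times> {..<Max (insert 0 (count Z ` set_mset Z))}"
  proof
    fix x assume "x \<in> pairs Z"
    then obtain \<beta> j where x: "x = (\<beta>, j)" "\<beta> \<in># Z" "j < count Z \<beta>" unfolding pairs_def by blast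
    have cm: "count Z \<beta> \<le> Max (insert 0 (count Z ` set_mset Z))" using x(2) by (intro Max_ge) auto
    have jm: "j < Max (insert 0 (count Z ` set_mset Z))" using x(3) cm by (rule less_le_trans)
    show "x \<in> set_mset Z \<times> {..<Max (insert 0 (count Z ` set_mset Z))}" using x(1,2) jm by simp
  qed
  then show ?thesis by (rule finite_subset) auto
qed

definition xsZ :: "complex multiset \<Rightarrow> (complex \<times> nat) list" where
  "xsZ Z = (SOME xs. distinct xs \<and> set xs = {(\<beta>, j). \<beta> \<in># Z \<and> j < count Z \<beta>})"

lemma xsZ: "distinct (xsZ Z) \<and> set (xsZ Z) = pairs Z"
proof -
  obtain xs where "set xs = pairs Z" "distinct xs" using finite_distinct_list[OF finite_pairs] by blast
  then have "\<exists>xs. distinct xs \<and> set xs = {(\<beta>, j). \<beta> \<in># Z \<and> j < count Z \<beta>}" unfolding pairs_def by blast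
  from someI_ex[OF this] show ?thesis unfolding xsZ_def pairs_def .
qed

definition vsZ :: "complex multiset \<Rightarrow> cfun list" where
  "vsZ Z = map (\<lambda>(\<beta>, j). kern Om H ip \<beta> j) (xsZ Z)"

lemma SS_eq: "SS_fun Om H ip Z = Dfun ip (kern Om H ip 0 (count Z 0)) (vsZ Z)"
  unfolding SS_fun_def vsZ_def xsZ_def Let_def ..

lemma pairs_repr: "okZ Z \<Longrightarrow> (\<beta>, j) \<in> pairs Z \<Longrightarrow> reproducible_order Om ip \<beta> j"
  unfolding okZ_def pairs_def by auto

lemma vsZ_H: "okZ Z \<Longrightarrow> set (vsZ Z) \<subseteq> H"
  unfolding vsZ_def using xsZ pairs_repr kern_prop(1) by auto

lemma vsZ_nth: "c < length (xsZ Z) \<Longrightarrow> vsZ Z ! c = kern Om H ip (fst (xsZ Z ! c)) (snd (xsZ Z ! c))"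
  unfolding vsZ_def by (simp add: case_prod_beta)

lemma Vz_eq: "okZ Z \<Longrightarrow> Vz Z = {f \<in> H. \<forall>c<length (vsZ Z). ip f (vsZ Z ! c) = 0}"
proof -
  have l: "length (vsZ Z) = length (xsZ Z)" unfolding vsZ_def by simp
  show ?thesis
  proof (intro equalityI subsetI)
    fix f assume f: "f \<in> Vz Z"
    show "f \<in> {f \<in> H. \<forall>c<length (vsZ Z). ip f (vsZ Z ! c) = 0}"
    proof (intro CollectI conjI allI impI)
      show "f \<in> H" using f unfolding Vz_def by auto
      fix c assume c: "c < length (vsZ Z)"
      then have "xsZ Z ! c \<in> set (xsZ Z)" using l by simp
      then have "xsZ Z ! c \<in> pairs Z" using xsZ by blast
      then show "ip f (vsZ Z ! c) = 0" using f c l unfolding vsZ_nth[OF c[unfolded l]] Vz_def pairs_def deriv_at_def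
        by (auto simp: case_prod_beta)
    qed
  next
    fix f assume f: "f \<in> {f \<in> H. \<forall>c<length (vsZ Z). ip f (vsZ Z ! c) = 0}"
    show "f \<in> Vz Z" unfolding Vz_def
    proof (intro CollectI conjI allI impI)
      show "f \<in> H" using f by auto
      fix \<beta> j assume "\<beta> \<in># Z" "j < count Z \<beta>"
      then have "(\<beta>, j) \<in> set (xsZ Z)" using xsZ unfolding pairs_def by auto
      then obtain c where c: "c < length (xsZ Z)" "xsZ Z ! c = (\<beta>, j)" unfolding in_set_conv_nth by blast
      then show "deriv_at Om H ip f \<beta> j = 0" using f vsZ_nth[OF c(1)] l unfolding deriv_at_def by auto
    qed
  qed
qed

lemma proj_props:
  assumes "csub V" "x \<in> H"
  shows "proj ip V x \<in> V" "\<forall>w\<in>V. ip (subf x (proj ip V x)) w = 0"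
proof -
  obtain v where "v \<in> V" "\<forall>w\<in>V. ip (subf x v) w = 0" using projection_exists[OF assms] by blast
  moreover then have "proj ip V x = v" using proj_unique[OF assms] by blast
  ultimately show "proj ip V x \<in> V" "\<forall>w\<in>V. ip (subf x (proj ip V x)) w = 0" by auto
qed

theorem gram_nonzero:
  assumes ok: "okZ Z"
  shows "det (gram (vsZ Z)) \<noteq> 0"
proof
  assume G0: "det (gram (vsZ Z)) = 0"
  define xs where "xs = xsZ Z"
  define vs where "vs = vsZ Z"
  define N where "N = length vs"
  have lN: "length xs = N" unfolding xs_def N_def vs_def vsZ_def by simp
  have vsH: "set vs \<subseteq> H" unfolding vs_def using vsZ_H[OF ok] .
  have vH: "vs ! c \<in> H" if "c < N" for c using vsH that unfolding N_def by (auto simp: nth_mem subset_iff)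
  have Gc: "gram vs \<in> carrier_mat N N" unfolding gram_def N_def by simp
  obtain x where x: "x \<in> carrier_vec N" "x \<noteq> 0\<^sub>v N" "gram vs *\<^sub>v x = 0\<^sub>v N"
    using det_0_iff_vec_prod_zero_field[OF Gc] G0 unfolding vs_def by blast
  have dx: "dim_vec x = N" using x(1) by simp
  define y where "y = (\<lambda>z. \<Sum>c<N. cnj (vec_index x c) * (vs ! c) z)"
  have yH: "y \<in> H" unfolding y_def using ip_sum1[of "{..<N}" "\<lambda>c. vs ! c" zf] vH by auto
  have yperp: "ip (vs ! r) y = 0" if r: "r < N" for r
  proof -
    have "ip (vs ! r) y = (\<Sum>c<N. vec_index x c * ip (vs ! r) (vs ! c))"
      unfolding y_def using ip_sum2[of "{..<N}" "\<lambda>c. vs ! c" "vs ! r" "\<lambda>c. cnj (vec_index x c)"] vH r by simp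
    also have "\<dots> = vec_index (gram vs *\<^sub>v x) r"
      using r dx unfolding gram_def N_def by (simp add: scalar_prod_def row_def atLeast0LessThan mult.commute)
    also have "\<dots> = 0" using x(3) r by simp
    finally show ?thesis .
  qed
  have "ip y y = (\<Sum>c<N. cnj (vec_index x c) * ip (vs ! c) y)"
    unfolding y_def[of] using ip_sum1[of "{..<N}" "\<lambda>c. vs ! c" y "\<lambda>c. cnj (vec_index x c)"] vH yH unfolding y_def by simp
  also have "\<dots> = 0" using yperp by simp
  finally have y0: "y = zf" using ip_self_zero yH by blast
  have poly0: "(\<Sum>c<N. vec_index x c * poly ((pderiv ^^ snd (xs ! c)) q) (fst (xs ! c))) = 0" for q
  proof -
    have "ip (polyfun Om q) y = (\<Sum>c<N. vec_index x c * ip (polyfun Om q) (vs ! c))"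
      unfolding y_def using ip_sum2[of "{..<N}" "\<lambda>c. vs ! c" "polyfun Om q" "\<lambda>c. cnj (vec_index x c)"] vH by simp
    also have "\<dots> = (\<Sum>c<N. vec_index x c * poly ((pderiv ^^ snd (xs ! c)) q) (fst (xs ! c)))"
    proof (rule sum.cong)
      fix c assume "c \<in> {..<N}"
      then have c: "c < length (xsZ Z)" using lN unfolding xs_def by simp
      have "xs ! c \<in> set xs" using c unfolding xs_def by simp
      then have "xs ! c \<in> pairs Z" using xsZ unfolding xs_def by blast
      then have r: "reproducible_order Om ip (fst (xs ! c)) (snd (xs ! c))" using pairs_repr[OF ok, of "fst (xs ! c)" "snd (xs ! c)"] by simp
      show "vec_index x c * ip (polyfun Om q) (vs ! c) = vec_index x c * poly ((pderiv ^^ snd (xs ! c)) q) (fst (xs ! c))"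
        unfolding vs_def vsZ_nth[OF c] xs_def[symmetric] kern_prop(2)[OF r] ..
    qed simp
    finally show ?thesis using y0 by simp
  qed
  have "\<exists>c<N. vec_index x c \<noteq> 0"
  proof (rule ccontr)
    assume "\<not> ?thesis"
    then have "x = 0\<^sub>v N" by (intro eq_vecI) (auto simp: dx)
    then show False using x(2) by simp
  qed
  then obtain c0 where c0: "c0 < N" "vec_index x c0 \<noteq> 0" by blast
  define bs where "bs = fst (xs ! c0)"
  define S where "S = {snd (xs ! c) | c. c < N \<and> vec_index x c \<noteq> 0 \<and> fst (xs ! c) = bs}"
  have Sfin: "finite S" unfolding S_def by simp
  have Sne: "snd (xs ! c0) \<in> S" unfolding S_def bs_def using c0 by blast
  define js where "js = Max S"
  have "js \<in> S" unfolding js_def using Sfin Sne by (intro Max_in) auto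
  then obtain cs where cs: "cs < N" "vec_index x cs \<noteq> 0" "fst (xs ! cs) = bs" "snd (xs ! cs) = js" unfolding S_def by blast
  have jmax: "snd (xs ! c) \<le> js" if "c < N" "vec_index x c \<noteq> 0" "fst (xs ! c) = bs" for c
    unfolding js_def using that Sfin by (intro Max_ge) (auto simp: S_def)
  have dist: "distinct xs" using xsZ unfolding xs_def by blast
  define Zf where "Zf = filter_mset (\<lambda>b. b \<noteq> bs) Z"
  define q where "q = [:-bs, 1:] ^ js * pZ Zf"
  have q0: "q \<noteq> 0" unfolding q_def using pZ_nonzero by simp
  have oq: "order bs q = js"
  proof -
    have "order bs q = order bs ([:-bs, 1:] ^ js) + order bs (pZ Zf)" unfolding q_def
      using q0 unfolding q_def by (rule order_mult)
    also have "order bs (pZ Zf) = 0" unfolding order_pZ Zf_def by simp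
    finally show ?thesis by (simp add: order_power_n_n)
  qed
  have terms: "vec_index x c * poly ((pderiv ^^ snd (xs ! c)) q) (fst (xs ! c)) = 0" if c: "c < N" "c \<noteq> cs" for c
  proof -
    have "xs ! c \<in> set xs" using c lN by simp
    then have "xs ! c \<in> pairs Z" using xsZ unfolding xs_def by blast
    then have pc: "fst (xs ! c) \<in># Z" "snd (xs ! c) < count Z (fst (xs ! c))" unfolding pairs_def by auto
    show ?thesis
    proof (cases "fst (xs ! c) = bs")
      case False
      have "count Zf (fst (xs ! c)) = count Z (fst (xs ! c))" unfolding Zf_def using False by simp
      moreover have "[:-fst (xs ! c), 1:] ^ count Zf (fst (xs ! c)) dvd q" unfolding q_def by (rule dvd_mult[OF pZ_dvd])
      ultimately have "[:-fst (xs ! c), 1:] ^ count Z (fst (xs ! c)) dvd q" by simp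
      then have "poly ((pderiv ^^ snd (xs ! c)) q) (fst (xs ! c)) = 0" using pc(2) by (rule order_ge_deriv_zero)
      then show ?thesis by simp
    next
      case True
      show ?thesis
      proof (cases "vec_index x c = 0")
        case True then show ?thesis by simp
      next
        case xn: False
        have le: "snd (xs ! c) \<le> js" using jmax[OF c(1) xn True] .
        have ne: "snd (xs ! c) \<noteq> js"
        proof
          assume "snd (xs ! c) = js"
          then have "xs ! c = xs ! cs" using True cs by (simp add: prod_eq_iff)
          then show False using dist c cs(1) lN by (simp add: nth_eq_iff_index_eq)
        qed
        have "[:-bs, 1:] ^ js dvd q" unfolding q_def by simp
        then have "poly ((pderiv ^^ snd (xs ! c)) q) bs = 0" using le ne by (intro order_ge_deriv_zero) auto
        then show ?thesis using True by simp
      qed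
    qed
  qed
  have "(\<Sum>c<N. vec_index x c * poly ((pderiv ^^ snd (xs ! c)) q) (fst (xs ! c)))
      = (\<Sum>c<N. if c = cs then vec_index x cs * poly ((pderiv ^^ js) q) bs else 0)"
    by (rule sum.cong) (use terms cs in auto)
  also have "\<dots> = vec_index x cs * poly ((pderiv ^^ js) q) bs" using cs(1) by simp
  finally have "vec_index x cs * poly ((pderiv ^^ js) q) bs = 0" using poly0[of q] by simp
  moreover have "poly ((pderiv ^^ js) q) bs \<noteq> 0" using order_deriv_nonzero[OF q0, of bs] oq by simp
  ultimately show False using cs(2) by simp
qed

theorem SS_char:
  assumes ok: "okZ Z"
  shows "SS_fun Om H ip Z = sclf (det (gram (vsZ Z))) (proj ip (Vz Z) (kern Om H ip 0 (count Z 0)))"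
proof -
  have kH: "kern Om H ip 0 (count Z 0) \<in> H" using kern_prop(1)[OF zero_reproducible] .
  have "proj ip (Vz Z) (kern Om H ip 0 (count Z 0)) = sclf (1 / det (gram (vsZ Z))) (Dfun ip (kern Om H ip 0 (count Z 0)) (vsZ Z))"
    by (rule Dfun_proj[OF kH vsZ_H[OF ok] gram_nonzero[OF ok] csub_Vz[OF ok] Vz_eq[OF ok]])
  then show ?thesis unfolding SS_eq using gram_nonzero[OF ok] by auto
qed

lemma deriv_at_SS:
  assumes ok: "okZ Z" and r: "reproducible_order Om ip \<beta> m"
  shows "deriv_at Om H ip (SS_fun Om H ip Z) \<beta> m
    = det (gram (vsZ Z)) * deriv_at Om H ip (proj ip (Vz Z) (kern Om H ip 0 (count Z 0))) \<beta> m"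
proof -
  have kH: "kern Om H ip 0 (count Z 0) \<in> H" using kern_prop(1)[OF zero_reproducible] .
  have "proj ip (Vz Z) (kern Om H ip 0 (count Z 0)) \<in> H"
    using proj_props(1)[OF csub_Vz[OF ok] kH] unfolding Vz_def by auto
  then show ?thesis unfolding SS_char[OF ok] deriv_at_def using ip_scl1 kern_prop(1)[OF r] by blast
qed

lemma beta0:
  assumes ok: "okZ Z"
  shows "deriv_at Om H ip (proj ip (Vz Z) (kern Om H ip 0 (count Z 0))) 0 (count Z 0) \<noteq> 0"
proof
  define k where "k = kern Om H ip 0 (count Z 0)"
  define v where "v = proj ip (Vz Z) k"
  assume "deriv_at Om H ip (proj ip (Vz Z) (kern Om H ip 0 (count Z 0))) 0 (count Z 0) = 0"
  then have vk: "ip v k = 0" unfolding deriv_at_def k_def v_def .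
  have kH: "k \<in> H" unfolding k_def using kern_prop(1)[OF zero_reproducible] .
  have vV: "v \<in> Vz Z" and orth: "\<forall>w\<in>Vz Z. ip (subf k v) w = 0"
    unfolding v_def using proj_props[OF csub_Vz[OF ok] kH] by auto
  have vH: "v \<in> H" using vV unfolding Vz_def by auto
  have "ip (subf k v) v = 0" using orth vV by blast
  then have "ip v (subf k v) = 0" using ip_sym[OF H_sub[OF kH vH] vH] by simp
  then have "ip v k - ip v v = 0" using ip_sub2[OF vH kH vH] by simp
  then have "ip v v = 0" using vk by simp
  then have v0: "v = zf" using ip_self_zero vH by blast
  have "polyfun Om (1 * pZ Z) \<in> PM Om (pZ Z)" unfolding PM_def by blast
  then have pV: "polyfun Om (pZ Z) \<in> Vz Z" using PM_in_Vz[OF ok] by auto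
  have "ip (subf k v) (polyfun Om (pZ Z)) = 0" using orth pV by blast
  then have "ip k (polyfun Om (pZ Z)) = 0" using v0 by simp
  then have "ip (polyfun Om (pZ Z)) k = 0" using ip_sym[OF kH poly_H, of "pZ Z"] by simp
  then have "poly ((pderiv ^^ count Z 0) (pZ Z)) 0 = 0" unfolding k_def kern_prop(2)[OF zero_reproducible] .
  moreover have "poly ((pderiv ^^ order 0 (pZ Z)) (pZ Z)) 0 \<noteq> 0" by (rule order_deriv_nonzero[OF pZ_nonzero])
  ultimately show False unfolding order_pZ by simp
qed

end


context hs begin

lemma kern0_H: "kern Om H ip 0 m \<in> H"
  using kern_prop(1)[OF zero_reproducible] .

lemma asym:
  assumes A: "\<forall>Z. reproducible_multiset Om ip Z \<longrightarrow>
            \<not> (\<exists>\<beta>. reproducible Om ip \<beta> \<and>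
                 ((\<beta> \<notin># Z \<and> deriv_at Om H ip (SS_fun Om H ip Z) \<beta> 0 = 0) \<or>
                  (\<exists>m. count Z \<beta> = m \<and> reproducible_order Om ip \<beta> m \<and>
                       deriv_at Om H ip (SS_fun Om H ip Z) \<beta> m = 0)))"
    and ok1: "okZ Z1" and ok2: "okZ Z2" and lt: "count Z1 \<beta> < count Z2 \<beta>"
    and eq: "proj ip (Vz Z1) (kern Om H ip 0 (count Z1 0)) = proj ip (Vz Z2) (kern Om H ip 0 (count Z2 0))"
  shows False
proof -
  define m where "m = count Z1 \<beta>"
  have b2: "\<beta> \<in># Z2" using lt by (simp add: count_inI)
  have r: "reproducible_order Om ip \<beta> m" using ok2 b2 lt unfolding okZ_def m_def by blast
  define v where "v = proj ip (Vz Z1) (kern Om H ip 0 (count Z1 0))"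
  have "v \<in> Vz Z2" unfolding v_def eq using proj_props(1)[OF csub_Vz[OF ok2] kern0_H] .
  then have dv: "deriv_at Om H ip v \<beta> m = 0" using b2 lt unfolding Vz_def m_def by blast
  show False
  proof (cases "\<beta> = 0")
    case True
    then show False using beta0[OF ok1] dv unfolding v_def m_def by simp
  next
    case False
    have "deriv_at Om H ip (SS_fun Om H ip Z1) \<beta> m = 0"
      unfolding deriv_at_SS[OF ok1 r] v_def[symmetric] dv by simp
    moreover have "reproducible Om ip \<beta>" unfolding reproducible_def using repr_le[OF r] by simp
    moreover have "reproducible_multiset Om ip Z1" using multiset_of_okZ[OF ok1] .
    ultimately show False using A r unfolding m_def by blast
  qed
qed

lemma dir_a_b:
  assumes A: "\<forall>Z. reproducible_multiset Om ip Z \<longrightarrow>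
            \<not> (\<exists>\<beta>. reproducible Om ip \<beta> \<and>
                 ((\<beta> \<notin># Z \<and> deriv_at Om H ip (SS_fun Om H ip Z) \<beta> 0 = 0) \<or>
                  (\<exists>m. count Z \<beta> = m \<and> reproducible_order Om ip \<beta> m \<and>
                       deriv_at Om H ip (SS_fun Om H ip Z) \<beta> m = 0)))"
  shows "\<forall>p q :: complex poly. p \<noteq> 0 \<longrightarrow> q \<noteq> 0 \<longrightarrow>
            proj ip (invsub H ip (polyfun Om p)) (kern Om H ip 0 (order 0 p)) =
            proj ip (invsub H ip (polyfun Om q)) (kern Om H ip 0 (order 0 q)) \<longrightarrow>
            invsub H ip (polyfun Om p) = invsub H ip (polyfun Om q)"
proof (intro allI impI)
  fix p q :: "complex poly"
  assume p0: "p \<noteq> 0" and q0: "q \<noteq> 0"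
    and eqp: "proj ip (invsub H ip (polyfun Om p)) (kern Om H ip 0 (order 0 p)) =
            proj ip (invsub H ip (polyfun Om q)) (kern Om H ip 0 (order 0 q))"
  obtain Zp where Zp: "okZ Zp" "count Zp 0 = order 0 p" "invsub H ip (polyfun Om p) = invsub H ip (polyfun Om (pZ Zp))"
    using exists_Z[OF p0] by blast
  obtain Zq where Zq: "okZ Zq" "count Zq 0 = order 0 q" "invsub H ip (polyfun Om q) = invsub H ip (polyfun Om (pZ Zq))"
    using exists_Z[OF q0] by blast
  have ip: "invsub H ip (polyfun Om p) = Vz Zp" using Zp(3) invsub_pZ[OF Zp(1)] by simp
  have iq: "invsub H ip (polyfun Om q) = Vz Zq" using Zq(3) invsub_pZ[OF Zq(1)] by simp
  have eqv: "proj ip (Vz Zp) (kern Om H ip 0 (count Zp 0)) = proj ip (Vz Zq) (kern Om H ip 0 (count Zq 0))"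
    using eqp unfolding ip iq Zp(2) Zq(2) .
  show "invsub H ip (polyfun Om p) = invsub H ip (polyfun Om q)"
  proof (cases "Zp = Zq")
    case True then show ?thesis unfolding ip iq by simp
  next
    case False
    have "\<exists>\<beta>. count Zp \<beta> \<noteq> count Zq \<beta>"
    proof (rule ccontr)
      assume "\<not> ?thesis"
      then have "Zp = Zq" by (intro multiset_eqI) auto
      then show False using False by simp
    qed
    then obtain \<beta> where "count Zp \<beta> \<noteq> count Zq \<beta>" by blast
    then have "count Zp \<beta> < count Zq \<beta> \<or> count Zq \<beta> < count Zp \<beta>" by linarith
    then show ?thesis
    proof
      assume "count Zp \<beta> < count Zq \<beta>"
      then show ?thesis using asym[OF A Zp(1) Zq(1) _ eqv] by blast
    next
      assume "count Zq \<beta> < count Zp \<beta>"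
      then show ?thesis using asym[OF A Zq(1) Zp(1) _ eqv[symmetric]] by blast
    qed
  qed
qed

lemma dir_b_a:
  assumes B: "\<forall>p q :: complex poly. p \<noteq> 0 \<longrightarrow> q \<noteq> 0 \<longrightarrow>
            proj ip (invsub H ip (polyfun Om p)) (kern Om H ip 0 (order 0 p)) =
            proj ip (invsub H ip (polyfun Om q)) (kern Om H ip 0 (order 0 q)) \<longrightarrow>
            invsub H ip (polyfun Om p) = invsub H ip (polyfun Om q)"
  shows "\<forall>Z. reproducible_multiset Om ip Z \<longrightarrow>
            \<not> (\<exists>\<beta>. reproducible Om ip \<beta> \<and>
                 ((\<beta> \<notin># Z \<and> deriv_at Om H ip (SS_fun Om H ip Z) \<beta> 0 = 0) \<or>
                  (\<exists>m. count Z \<beta> = m \<and> reproducible_order Om ip \<beta> m \<and>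
                       deriv_at Om H ip (SS_fun Om H ip Z) \<beta> m = 0)))"
proof (intro allI impI notI)
  fix Z assume RZ: "reproducible_multiset Om ip Z"
    and E: "\<exists>\<beta>. reproducible Om ip \<beta> \<and>
                 ((\<beta> \<notin># Z \<and> deriv_at Om H ip (SS_fun Om H ip Z) \<beta> 0 = 0) \<or>
                  (\<exists>m. count Z \<beta> = m \<and> reproducible_order Om ip \<beta> m \<and>
                       deriv_at Om H ip (SS_fun Om H ip Z) \<beta> m = 0))"
  have ok: "okZ Z" using okZ_of_multiset[OF RZ] .
  obtain \<beta> where rb: "reproducible Om ip \<beta>"
    and disj: "(\<beta> \<notin># Z \<and> deriv_at Om H ip (SS_fun Om H ip Z) \<beta> 0 = 0) \<or>
                  (\<exists>m. count Z \<beta> = m \<and> reproducible_order Om ip \<beta> m \<and>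
                       deriv_at Om H ip (SS_fun Om H ip Z) \<beta> m = 0)" using E by blast
  have "\<exists>m. count Z \<beta> = m \<and> reproducible_order Om ip \<beta> m \<and> deriv_at Om H ip (SS_fun Om H ip Z) \<beta> m = 0"
    using disj
  proof
    assume "\<beta> \<notin># Z \<and> deriv_at Om H ip (SS_fun Om H ip Z) \<beta> 0 = 0"
    then show ?thesis using rb unfolding reproducible_def by (intro exI[of _ 0]) (simp add: not_in_iff)
  qed
  then obtain m where m: "count Z \<beta> = m" and r: "reproducible_order Om ip \<beta> m"
    and dS: "deriv_at Om H ip (SS_fun Om H ip Z) \<beta> m = 0" by blast
  define k where "k = kern Om H ip 0 (count Z 0)"
  define v where "v = proj ip (Vz Z) k"
  have kH: "k \<in> H" unfolding k_def by (rule kern0_H)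
  have dv: "deriv_at Om H ip v \<beta> m = 0"
    using dS gram_nonzero[OF ok] unfolding deriv_at_SS[OF ok r] v_def k_def by simp
  have vV: "v \<in> Vz Z" and orth: "\<forall>w\<in>Vz Z. ip (subf k v) w = 0"
    unfolding v_def using proj_props[OF csub_Vz[OF ok] kH] by auto
  show False
  proof (cases "\<beta> = 0")
    case True
    then show False using beta0[OF ok] dv m unfolding v_def k_def by simp
  next
    case False
    define Z' where "Z' = add_mset \<beta> Z"
    have ok': "okZ Z'" unfolding okZ_def Z'_def
    proof (intro allI impI)
      fix \<gamma> j assume g: "\<gamma> \<in># add_mset \<beta> Z" "j < count (add_mset \<beta> Z) \<gamma>"
      show "reproducible_order Om ip \<gamma> j"
      proof (cases "\<gamma> = \<beta> \<and> j = m")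
        case True then show ?thesis using r by simp
      next
        case False
        then have "j < count Z \<gamma>" using g(2) m by (auto split: if_splits)
        then show ?thesis using ok unfolding okZ_def by (simp add: count_inI)
      qed
    qed
    define p where "p = pZ Z"
    define q where "q = pZ Z'"
    have p0: "p \<noteq> 0" and q0: "q \<noteq> 0" unfolding p_def q_def by (simp_all add: pZ_nonzero)
    have op: "order 0 p = count Z 0" unfolding p_def by (rule order_pZ)
    have oq: "order 0 q = count Z 0" unfolding q_def order_pZ Z'_def using False by simp
    have ipz: "invsub H ip (polyfun Om p) = Vz Z" unfolding p_def by (rule invsub_pZ[OF ok])
    have iqz: "invsub H ip (polyfun Om q) = Vz Z'" unfolding q_def by (rule invsub_pZ[OF ok'])
    have sub: "Vz Z' \<subseteq> Vz Z" unfolding Z'_def Vz_add by blast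
    have vV': "v \<in> Vz Z'" unfolding Z'_def Vz_add using vV dv m by simp
    have pj: "proj ip (Vz Z') k = v"
      by (rule proj_unique[OF csub_Vz[OF ok'] kH vV']) (use orth sub in blast)
    have "proj ip (invsub H ip (polyfun Om p)) (kern Om H ip 0 (order 0 p)) =
            proj ip (invsub H ip (polyfun Om q)) (kern Om H ip 0 (order 0 q))"
      unfolding ipz iqz op oq k_def[symmetric] pj v_def ..
    then have "Vz Z = Vz Z'" using B p0 q0 ipz iqz by metis
    moreover have "polyfun Om p \<in> Vz Z"
    proof -
      have "polyfun Om (1 * pZ Z) \<in> PM Om (pZ Z)" unfolding PM_def by blast
      then show ?thesis unfolding p_def using PM_in_Vz[OF ok] by auto
    qed
    ultimately have "polyfun Om p \<in> Vz Z'" by simp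
    then have "deriv_at Om H ip (polyfun Om p) \<beta> m = 0" unfolding Z'_def Vz_add using m by simp
    then have "poly ((pderiv ^^ m) p) \<beta> = 0" unfolding deriv_at_poly[OF r] .
    moreover have "poly ((pderiv ^^ order \<beta> p) p) \<beta> \<noteq> 0" by (rule order_deriv_nonzero[OF p0])
    moreover have "order \<beta> p = m" unfolding p_def order_pZ m ..
    ultimately show False by simp
  qed
qed

end

theorem mainTheorem14:
  fixes Om :: "complex set" and H :: "(complex \<Rightarrow> complex) set"
    and ip :: "(complex \<Rightarrow> complex) \<Rightarrow> (complex \<Rightarrow> complex) \<Rightarrow> complex"
  assumes "setting Om H ip"
  shows "(\<forall>Z. reproducible_multiset Om ip Z \<longrightarrow>
            \<not> (\<exists>\<beta>. reproducible Om ip \<beta> \<and>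
                 ((\<beta> \<notin># Z \<and> deriv_at Om H ip (SS_fun Om H ip Z) \<beta> 0 = 0) \<or>
                  (\<exists>m. count Z \<beta> = m \<and> reproducible_order Om ip \<beta> m \<and>
                       deriv_at Om H ip (SS_fun Om H ip Z) \<beta> m = 0))))
     \<longleftrightarrow>
         (\<forall>p q :: complex poly. p \<noteq> 0 \<longrightarrow> q \<noteq> 0 \<longrightarrow>
            proj ip (invsub H ip (polyfun Om p)) (kern Om H ip 0 (order 0 p)) =
            proj ip (invsub H ip (polyfun Om q)) (kern Om H ip 0 (order 0 q)) \<longrightarrow>
            invsub H ip (polyfun Om p) = invsub H ip (polyfun Om q))"
proof -
  interpret hs Om H ip by (rule hs.intro[OF assms])
  show ?thesis using dir_a_b dir_b_a by blast
qed


end
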